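(* Assume the standing time-series setup described in the context. Let $(c_n)$ be a sequence of natural numbers with $|G_n|\le c_n$ for all $n$, where $G_n:=G\cap\{1,\dots,n\}$, let $\mathcal{U}_n:=\{S\subseteq\{1,\dots,n\}:|S|=n-c_n\}$, and assume conditions (A1) and (A2) hold. Then: (i) $|\mathcal{U}_n|\le(en/c_n)^{c_n}$; (ii) for every $n\in\mathbb{N}$, the $n$ components of $\eta^n_\phi:=(T^{\phi,n}_k(\eta))_{k\le n}$ are i.i.d. centred Gaussian random variables with variance $\sigma_\eta^2/n$; (iii) for all $\delta>0$ there exist $c'>0$ and $\bar n\in\mathbb{N}$ such that for all $n\ge\bar n$, \[ \mathbb{P}\Big[\min_{S\in\mathcal{U}_n}\sqrt{\lambda_{\min}\big((X^n_\phi)_{S\setminus G_n}^\top(X^n_\phi)_{S\setminus G_n}\big)}\ge c'\Big]\ge1-\delta. \]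
   Context: Standing setup: $T>0$; $\phi=\{\phi_k\}_{k\in\mathbb{N}}$ is an orthonormal basis of $L^2([0,T])$ with each $\phi_k$ right-continuous (or each left-continuous); $G\subseteq\mathbb{N}$; $U=(U_t)_{t\in[0,T]}$ is a real measurable process with $\mathbb{E}[\int_0^TU_t^2dt]<\infty$, $\langle U,\phi_k\rangle_{L^2}=0$ a.s. for $k\notin G$, and a.s. for all $t$, $U_t=\sum_{k\in G}\langle\phi_k,U\rangle_{L^2}\phi_k(t)$; $X$ is an $\mathbb{R}^d$-valued process; $\eta=(\eta_t)_{t\in[0,T]}$ consists of i.i.d. centred Gaussians with variance $\sigma_\eta^2\ge0$, independent of $X$; $\beta\in\mathbb{R}^d$, $Y_t=X_t^\top\beta+U_t+\eta_t$; observations at times $Tl/n$, $l=1,\dots,n$. $T^{\phi,n}_k(V):=\frac1n\sum_{l=1}^nV_{Tl/n}\phi_k(Tl/n)$ (componentwise); $X^n_\phi\in\mathbb{R}^{n\times d}$ has $k$-th row $T^{\phi,n}_k(X)^\top$; $(X^n_\phi)_S$ denotes the rows indexed by $S$. (A1): for all $n$ and $l,k\le n$, $\frac1n\sum_{j=1}^n\phi_l(Tj/n)\phi_k(Tj/n)=\mathbb{1}\{l=k\}$. (A2): for every $\delta>0$ there exist $c'>0$, $\bar n$ such that for all $n\ge\bar n$ there is $S'_n\subseteq\{1,\dots,n\}$, $|S'_n|=2c_n+d$, such that for all $S''\subset S'_n$ with $|S''|=d$, with probability at least $1-\delta$, $\lambda_{\min}((X^n_\phi)_{S''}^\top(X^n_\phi)_{S''})\ge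 c'$. *)

theory Defs
  imports "HOL-Probability.Probability"
begin

(* Convention: \<nat> = {1,2,...}; the basis is indexed by k \<ge> 1 (value phi 0 is irrelevant). *)

definition ONB_L2 :: "real \<Rightarrow> (nat \<Rightarrow> real \<Rightarrow> real) \<Rightarrow> bool" where
  "ONB_L2 T \<phi> \<longleftrightarrow>
     (\<forall>k\<ge>1. \<phi> k \<in> borel_measurable lborel \<and> set_integrable lborel {0..T} (\<lambda>t. (\<phi> k t)\<^sup>2)) \<and>
     (\<forall>k\<ge>1. \<forall>l\<ge>1. (LINT t:{0..T}|lborel. \<phi> k t * \<phi> l t) = (if k = l then 1 else 0)) \<and>
     (\<forall>f::real \<Rightarrow> real. f \<in> borel_measurable lborel \<and> set_integrable lborel {0..T} (\<lambda>t. (f t)\<^sup>2) \<and>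
        (\<forall>k\<ge>1. (LINT t:{0..T}|lborel. f t * \<phi> k t) = 0)
        \<longrightarrow> (AE t in lborel. t \<in> {0..T} \<longrightarrow> f t = 0))"

definition one_sided_continuous :: "real \<Rightarrow> (nat \<Rightarrow> real \<Rightarrow> real) \<Rightarrow> bool" where
  "one_sided_continuous T \<phi> \<longleftrightarrow>
     (\<forall>k\<ge>1. \<forall>t\<in>{0..T}. continuous (at t within {t..T}) (\<phi> k)) \<or>
     (\<forall>k\<ge>1. \<forall>t\<in>{0..T}. continuous (at t within {0..t}) (\<phi> k))"

definition centred_gaussian :: "'a measure \<Rightarrow> real \<Rightarrow> ('a \<Rightarrow> real) \<Rightarrow> bool" where
  "centred_gaussian M v Z \<longleftrightarrow> Z \<in> borel_measurable M \<and>
     distr M borel Z = (if v = 0 then return borel 0 else density lborel (normal_density 0 (sqrt v)))"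

definition Tphi :: "real \<Rightarrow> (nat \<Rightarrow> real \<Rightarrow> real) \<Rightarrow> nat \<Rightarrow> nat \<Rightarrow> (real \<Rightarrow> 'b::real_vector) \<Rightarrow> 'b" where
  "Tphi T \<phi> n k V = (1 / real n) *\<^sub>R (\<Sum>l=1..n. \<phi> k (T * real l / real n) *\<^sub>R V (T * real l / real n))"

(* (X^n_phi)_S^T (X^n_phi)_S, where the k-th row of X^n_phi is T^{phi,n}_k(X)^T *)
definition gram :: "real \<Rightarrow> (nat \<Rightarrow> real \<Rightarrow> real) \<Rightarrow> nat \<Rightarrow> (real \<Rightarrow> real^'d) \<Rightarrow> nat set \<Rightarrow> real^'d^'d" where
  "gram T \<phi> n X S = (\<chi> i j. \<Sum>k\<in>S. (Tphi T \<phi> n k X) $ i * (Tphi T \<phi> n k X) $ j)"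

definition lambda_min :: "real^'d^'d \<Rightarrow> real" where
  "lambda_min A = Min {e. \<exists>v. v \<noteq> 0 \<and> A *v v = e *\<^sub>R v}"

definition Ucal :: "(nat \<Rightarrow> nat) \<Rightarrow> nat \<Rightarrow> nat set set" where
  "Ucal c n = {S. S \<subseteq> {1..n} \<and> int (card S) = int n - int (c n)}"

definition L2inner :: "real \<Rightarrow> (real \<Rightarrow> real) \<Rightarrow> (real \<Rightarrow> real) \<Rightarrow> real" where
  "L2inner T f g = (LINT t:{0..T}|lborel. f t * g t)"

end

theory Submission
  imports Defs
begin

lemma pow_div_fact_le_exp:
  fixes x :: real assumes "x \<ge> 0"
  shows "x ^ k / fact k \<le> exp x"
proof -
  have s: "(\<lambda>n. x^n /\<^sub>R fact n) sums exp x" by (rule exp_converges)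
  have "x ^ k / fact k = (\<Sum>n\<in>{k}. x^n /\<^sub>R fact n)" by (simp add: divide_inverse mult.commute)
  also have "\<dots> \<le> exp x"
    using sum_le_suminf[OF sums_summable[OF s], of "{k}"] s assms
    by (simp add: sums_iff)
  finally show ?thesis .
qed

lemma binom_bound:
  fixes n c :: nat assumes "c \<le> n"
  shows "real (n choose c) \<le> (exp 1 * real n / real c) ^ c"
proof (cases "c = 0")
  case True then show ?thesis by simp
next
  case False
  have h1: "real (n choose c) * fact c \<le> real n ^ c"
    using binomial_fact_pow[of n c] by (metis of_nat_fact of_nat_le_iff of_nat_mult of_nat_power)
  have h2: "real c ^ c / fact c \<le> exp (real c)" by (rule pow_div_fact_le_exp) simp
  have "real (n choose c) \<le> real n ^ c / fact c" using h1 by (simp add: field_simps)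
  also have "\<dots> = (real n / real c) ^ c * (real c ^ c / fact c)" using False by (simp add: field_simps power_divide)
  also have "\<dots> \<le> (real n / real c) ^ c * exp (real c)" using h2 by (intro mult_left_mono) auto
  also have "\<dots> = (exp 1 * real n / real c) ^ c"
    by (simp add: power_mult_distrib exp_of_nat_mult[symmetric] power_divide mult.commute)
  finally show ?thesis .
qed

lemma part1: "real (card (Ucal c n)) \<le> (exp 1 * real n / real (c n)) ^ c n"
proof (cases "c n \<le> n")
  case True
  have "Ucal c n = {S. S \<subseteq> {1..n} \<and> card S = n - c n}" unfolding Ucal_def using True by auto
  then have "card (Ucal c n) = n choose (n - c n)" by (simp add: n_subsets)
  also have "\<dots> = n choose c n" using True by (simp add: binomial_symmetric[symmetric])
  finally show ?thesis using binom_bound[OF True] by simp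
next
  case False
  then have "Ucal c n = {}" unfolding Ucal_def by auto
  then show ?thesis using False by simp
qed

lemma mv_add: "(A::real^'n^'m) *v (x + y) = A *v x + A *v y"
  using linear_add[OF matrix_vector_mul_linear] by blast
lemma mv_scale: "(A::real^'n^'m) *v (c *\<^sub>R x) = c *\<^sub>R (A *v x)"
  using linear_scale[OF matrix_vector_mul_linear] by blast

lemma quad_nonneg_lin_zero:
  fixes a K :: real
  assumes "\<forall>t. 2 * t * a + t^2 * K \<ge> 0" and "a \<ge> 0"
  shows "a = 0"
proof (rule ccontr)
  assume "a \<noteq> 0" then have a: "a > 0" using assms(2) by simp
  define B where "B = \<bar>K\<bar>"
  have B: "B \<ge> 0" "K \<le> B" unfolding B_def by auto
  define t where "t = - a / (B + 1)"
  have pos: "B + 1 > 0" using B by simp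
  have "2 * t * a + t^2 * K \<le> 2 * t * a + t^2 * B" using B by (simp add: mult_left_mono)
  also have "\<dots> = (a^2 / (B+1)) * (- 2 + B / (B + 1))"
  proof -
    have ne: "B + 1 \<noteq> 0" using pos by simp
    show ?thesis unfolding t_def using ne
      by (simp add: divide_simps power2_eq_square) (simp add: algebra_simps)
  qed
  also have "\<dots> < 0"
  proof -
    have "B / (B + 1) < 1" using pos by simp
    then have "- 2 + B / (B + 1) < 0" by simp
    moreover have "a^2 / (B+1) > 0" using a pos by simp
    ultimately show ?thesis using mult_pos_neg by blast
  qed
  finally show False using assms(1) by (metis not_le)
qed

lemma lambda_min_ge_iff:
  fixes A :: "real^'n^'n"
  assumes sym: "\<And>x y. x \<bullet> (A *v y) = y \<bullet> (A *v x)"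
  shows "lambda_min A \<ge> c \<longleftrightarrow> (\<forall>w. w \<bullet> (A *v w) \<ge> c * (norm w)^2)"
proof -
  define ev where "ev = {e. \<exists>v. v \<noteq> 0 \<and> A *v v = e *\<^sub>R v}"
  have lm: "lambda_min A = Min ev" unfolding lambda_min_def ev_def ..
  define u where "u e = (SOME v. v \<noteq> 0 \<and> A *v v = e *\<^sub>R v)" for e
  have u: "u e \<noteq> 0 \<and> A *v u e = e *\<^sub>R u e" if "e \<in> ev" for e
    using that unfolding ev_def u_def by (metis (mono_tags, lifting) mem_Collect_eq someI_ex)
  have inj: "inj_on u ev"
  proof (rule inj_onI)
    fix e1 e2 assume "e1 \<in> ev" "e2 \<in> ev" "u e1 = u e2"
    then have "e1 *\<^sub>R u e1 = e2 *\<^sub>R u e1" "u e1 \<noteq> 0" using u by metis+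
    then show "e1 = e2" by (metis scaleR_cancel_right)
  qed
  have orth: "pairwise orthogonal (u ` ev)"
  proof (clarsimp simp: pairwise_def)
    fix e1 e2 assume e: "e1 \<in> ev" "e2 \<in> ev" "u e1 \<noteq> u e2"
    then have ne: "e1 \<noteq> e2" by auto
    have "e1 * (u e1 \<bullet> u e2) = (A *v u e1) \<bullet> u e2" using u[OF e(1)] by simp
    also have "\<dots> = u e2 \<bullet> (A *v u e1)" by (simp add: inner_commute)
    also have "\<dots> = u e1 \<bullet> (A *v u e2)" by (rule sym)
    also have "\<dots> = e2 * (u e1 \<bullet> u e2)" using u[OF e(2)] by simp
    finally have "(e1 - e2) * (u e1 \<bullet> u e2) = 0" by (simp add: algebra_simps)
    then show "orthogonal (u e1) (u e2)" using ne by (simp add: orthogonal_def)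
  qed
  have "0 \<notin> u ` ev" using u by auto
  then have "independent (u ` ev)" using pairwise_orthogonal_independent[OF orth] by simp
  then have "finite (u ` ev)" using independent_bound by blast
  then have fin: "finite ev" using finite_imageD[OF _ inj] by blast
  define f where "f w = w \<bullet> (A *v w)" for w :: "real^'n"
  have contf: "continuous_on UNIV f" unfolding f_def
    by (intro continuous_intros linear_continuous_on matrix_vector_mul_linear[unfolded linear_conv_bounded_linear])
  have sne: "sphere (0::real^'n) 1 \<noteq> {}"
  proof -
    have "axis undefined (1::real) \<in> sphere (0::real^'n) 1" by simp
    then show ?thesis by blast
  qed
  obtain u0 where u0: "u0 \<in> sphere 0 1" "\<forall>y\<in>sphere 0 1. f u0 \<le> f y"
    using continuous_attains_inf[OF compact_sphere sne continuous_on_subset[OF contf]] by blast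
  define m where "m = f u0"
  have fscale: "f (r *\<^sub>R w) = r^2 * f w" for r w unfolding f_def by (simp add: mv_scale power2_eq_square)
  have lb: "f w \<ge> m * (norm w)^2" for w
  proof (cases "w = 0")
    case True then show ?thesis by (simp add: f_def)
  next
    case False
    have "(inverse (norm w)) *\<^sub>R w \<in> sphere 0 1" using False by simp
    then have "m \<le> f ((inverse (norm w)) *\<^sub>R w)" using u0 m_def by blast
    also have "\<dots> = f w / (norm w)^2" by (simp add: fscale power_inverse divide_inverse mult.commute)
    finally show ?thesis using False by (simp add: field_simps)
  qed
  have nu0: "norm u0 = 1" using u0 by simp
  define r where "r = A *v u0 - m *\<^sub>R u0"
  have exp1: "f (u0 + t *\<^sub>R r) = f u0 + 2 * t * (r \<bullet> (A *v u0)) + t^2 * f r" for t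
  proof -
    have "f (u0 + t *\<^sub>R r) = u0 \<bullet> (A *v u0) + t * (u0 \<bullet> (A *v r)) + t * (r \<bullet> (A *v u0)) + t^2 * (r \<bullet> (A *v r))"
      unfolding f_def by (simp add: mv_add mv_scale inner_add_left inner_add_right power2_eq_square algebra_simps)
    then show ?thesis using sym[of u0 r] unfolding f_def by simp
  qed
  have exp2: "(norm (u0 + t *\<^sub>R r))^2 = 1 + 2 * t * (u0 \<bullet> r) + t^2 * (norm r)^2" for t
  proof -
    have uu: "u0 \<bullet> u0 = 1" using nu0 by (metis power2_norm_eq_inner power_one)
    have rr: "r \<bullet> r = (norm r)^2" by (simp add: power2_norm_eq_inner)
    have "(norm (u0 + t *\<^sub>R r))^2 = (u0 + t *\<^sub>R r) \<bullet> (u0 + t *\<^sub>R r)" by (simp add: power2_norm_eq_inner)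
    also have "\<dots> = u0 \<bullet> u0 + 2 * t * (u0 \<bullet> r) + t^2 * (r \<bullet> r)"
      by (simp add: inner_add_left inner_add_right inner_commute power2_eq_square algebra_simps)
    finally show ?thesis using uu rr by simp
  qed
  have key: "2 * t * (r \<bullet> r) + t^2 * (f r - m * (norm r)^2) \<ge> 0" for t
  proof -
    have "f (u0 + t *\<^sub>R r) \<ge> m * (norm (u0 + t *\<^sub>R r))^2" by (rule lb)
    then have "f u0 + 2 * t * (r \<bullet> (A *v u0)) + t^2 * f r \<ge> m * (1 + 2 * t * (u0 \<bullet> r) + t^2 * (norm r)^2)"
      using exp1 exp2 by simp
    moreover have "r \<bullet> (A *v u0) = r \<bullet> r + m * (u0 \<bullet> r)" unfolding r_def
      by (simp add: inner_diff_left inner_diff_right inner_commute algebra_simps)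
    ultimately show ?thesis unfolding m_def by (simp add: algebra_simps)
  qed
  have "r \<bullet> r = 0" using quad_nonneg_lin_zero[of "r \<bullet> r" "f r - m * (norm r)^2"] key by simp
  then have "A *v u0 = m *\<^sub>R u0" unfolding r_def by simp
  moreover have "u0 \<noteq> 0" using nu0 by auto
  ultimately have mev: "m \<in> ev" unfolding ev_def by blast
  have evge: "e \<ge> c" if "e \<in> ev" and H: "\<forall>w. w \<bullet> (A *v w) \<ge> c * (norm w)^2" for e
  proof -
    have "u e \<bullet> (A *v u e) = e * (norm (u e))^2" using u[OF that(1)] by (simp add: power2_norm_eq_inner)
    then have "e * (norm (u e))^2 \<ge> c * (norm (u e))^2" using H by metis
    moreover have "(norm (u e))^2 > 0" using u[OF that(1)] by simp
    ultimately show ?thesis by simp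
  qed
  show ?thesis
  proof
    assume "lambda_min A \<ge> c"
    then have "m \<ge> c" using lm Min_le[OF fin mev] by simp
    then show "\<forall>w. w \<bullet> (A *v w) \<ge> c * (norm w)^2"
      using lb unfolding f_def by (meson mult_right_mono order_trans zero_le_power2)
  next
    assume H: "\<forall>w. w \<bullet> (A *v w) \<ge> c * (norm w)^2"
    have "ev \<noteq> {}" using mev by auto
    then show "lambda_min A \<ge> c" unfolding lm using fin evge[OF _ H] by (simp add: Min_ge_iff)
  qed
qed

lemma gram_mv: "gram T \<phi> n X S *v w = (\<Sum>k\<in>S. (Tphi T \<phi> n k X \<bullet> w) *\<^sub>R Tphi T \<phi> n k X)"
unfolding vec_eq_iff proof (rule allI)
  fix i
  show "(gram T \<phi> n X S *v w) $ i = (\<Sum>k\<in>S. (Tphi T \<phi> n k X \<bullet> w) *\<^sub>R Tphi T \<phi> n k X) $ i"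
    unfolding gram_def matrix_vector_mult_def inner_vec_def
    by (simp add: sum_component sum_distrib_left sum_distrib_right sum.swap[of _ S] algebra_simps)
qed

lemma gram_inner: "x \<bullet> (gram T \<phi> n X S *v y) = (\<Sum>k\<in>S. (Tphi T \<phi> n k X \<bullet> x) * (Tphi T \<phi> n k X \<bullet> y))"
  unfolding gram_mv by (simp add: inner_sum_right inner_commute mult.commute)

lemma lmin_gram_iff:
  "lambda_min (gram T \<phi> n X S) \<ge> c \<longleftrightarrow> (\<forall>w. (\<Sum>k\<in>S. (Tphi T \<phi> n k X \<bullet> w)^2) \<ge> c * (norm w)^2)"
proof -
  have "lambda_min (gram T \<phi> n X S) \<ge> c \<longleftrightarrow> (\<forall>w. w \<bullet> (gram T \<phi> n X S *v w) \<ge> c * (norm w)^2)"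
    by (rule lambda_min_ge_iff) (simp add: gram_inner mult.commute)
  then show ?thesis by (simp add: gram_inner power2_eq_square)
qed

lemma Tphi_meas:
  fixes X :: "real \<Rightarrow> 'a \<Rightarrow> real^'d"
  assumes "T \<ge> 0" "\<forall>t\<in>{0..T}. X t \<in> borel_measurable M"
  shows "(\<lambda>\<omega>. Tphi T \<phi> n k (\<lambda>t. X t \<omega>)) \<in> borel_measurable M"
proof -
  have "(\<lambda>\<omega>. (\<Sum>l=1..n. \<phi> k (T * real l / real n) *\<^sub>R X (T * real l / real n) \<omega>)) \<in> borel_measurable M"
  proof (rule borel_measurable_sum)
    fix l assume l: "l \<in> {1..n}"
    have "T * real l / real n \<in> {0..T}"
    proof -
      have "T * real l \<le> T * real n" using l assms(1) by (intro mult_left_mono) auto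
      then show ?thesis using l assms(1) by (auto simp: field_simps)
    qed
    then have "X (T * real l / real n) \<in> borel_measurable M" using assms(2) by auto
    then show "(\<lambda>x. \<phi> k (T * real l / real n) *\<^sub>R X (T * real l / real n) x) \<in> borel_measurable M"
      by (rule borel_measurable_scaleR[OF borel_measurable_const])
  qed
  then show ?thesis unfolding Tphi_def by (rule borel_measurable_scaleR[OF borel_measurable_const])
qed

lemma quad_event_meas:
  fixes X :: "real \<Rightarrow> 'a \<Rightarrow> real^'d"
  assumes "T \<ge> 0" "\<forall>t\<in>{0..T}. X t \<in> borel_measurable M"
  shows "{\<omega>\<in>space M. \<forall>w. (\<Sum>k\<in>S. (Tphi T \<phi> n k (\<lambda>t. X t \<omega>) \<bullet> w)^2) \<ge> c * (norm w)^2} \<in> sets M"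
proof -
  obtain D :: "(real^'d) set" where D: "countable D" "D \<noteq> {}"
    "\<And>U. open U \<Longrightarrow> U \<noteq> {} \<Longrightarrow> \<exists>y \<in> D. y \<in> U" using countable_dense_exists by blast
  define h where "h \<omega> w = (\<Sum>k\<in>S. (Tphi T \<phi> n k (\<lambda>t. X t \<omega>) \<bullet> w)^2) - c * (norm w)^2" for \<omega> w
  have eq: "(\<forall>w. h \<omega> w \<ge> 0) \<longleftrightarrow> (\<forall>i::nat. h \<omega> (from_nat_into D i) \<ge> 0)" for \<omega>
  proof
    assume H: "\<forall>i::nat. h \<omega> (from_nat_into D i) \<ge> 0"
    show "\<forall>w. h \<omega> w \<ge> 0"
    proof (rule ccontr)
      assume "\<not> (\<forall>w. h \<omega> w \<ge> 0)"
      then obtain w where w: "h \<omega> w < 0" by (meson not_le)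
      have "open {w. h \<omega> w < 0}" unfolding h_def
        by (intro open_Collect_less continuous_intros)
      then obtain y where "y \<in> D" "h \<omega> y < 0" using D(3)[of "{w. h \<omega> w < 0}"] w by auto
      then obtain i where "y = from_nat_into D i" using D(1,2) by (metis from_nat_into_surj)
      then show False using H \<open>h \<omega> y < 0\<close> by (metis not_le)
    qed
  qed auto
  have m: "\<And>k. (\<lambda>\<omega>. Tphi T \<phi> n k (\<lambda>t. X t \<omega>)) \<in> borel_measurable M" using Tphi_meas[OF assms] .
  have "{\<omega>\<in>space M. \<forall>i::nat. h \<omega> (from_nat_into D i) \<ge> 0} \<in> sets M"
    unfolding h_def using m by measurable
  moreover have "{\<omega>\<in>space M. \<forall>w. (\<Sum>k\<in>S. (Tphi T \<phi> n k (\<lambda>t. X t \<omega>) \<bullet> w)^2) \<ge> c * (norm w)^2}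
      = {\<omega>\<in>space M. \<forall>i::nat. h \<omega> (from_nat_into D i) \<ge> 0}"
    using eq unfolding h_def by auto
  ultimately show ?thesis by simp
qed

lemma part3:
  fixes X :: "real \<Rightarrow> 'a \<Rightarrow> real^'d" and M :: "'a measure"
  assumes M: "prob_space M" and T: "T > 0"
    and X_meas: "\<forall>t\<in>{0..T}. X t \<in> borel_measurable M"
    and c: "\<forall>n. card (G \<inter> {1..n}) \<le> c n"
    and A2: "\<forall>\<delta>>0. \<exists>c'>0. \<exists>nbar. \<forall>n\<ge>nbar. \<exists>S'. S' \<subseteq> {1..n} \<and> card S' = 2 * c n + CARD('d) \<and>
               measure M {\<omega> \<in> space M. \<forall>S''. S'' \<subseteq> S' \<and> card S'' = CARD('d) \<longrightarrow>
                  lambda_min (gram T \<phi> n (\<lambda>t. X t \<omega>) S'') \<ge> c'} \<ge> 1 - \<delta>"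
  shows "\<forall>\<delta>>0. \<exists>c'>0. \<exists>nbar. \<forall>n\<ge>nbar.
              measure M {\<omega> \<in> space M. \<forall>S\<in>Ucal c n.
                 sqrt (lambda_min (gram T \<phi> n (\<lambda>t. X t \<omega>) (S - G \<inter> {1..n}))) \<ge> c'} \<ge> 1 - \<delta>"
proof (intro allI impI)
  fix \<delta> :: real assume "\<delta> > 0"
  then obtain c'' nbar where c'': "c'' > 0" and nb: "\<forall>n\<ge>nbar. \<exists>S'. S' \<subseteq> {1..n} \<and> card S' = 2 * c n + CARD('d) \<and>
               measure M {\<omega> \<in> space M. \<forall>S''. S'' \<subseteq> S' \<and> card S'' = CARD('d) \<longrightarrow>
                  lambda_min (gram T \<phi> n (\<lambda>t. X t \<omega>) S'') \<ge> c''} \<ge> 1 - \<delta>"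
    using A2 by blast
  interpret prob_space M by (rule M)
  have "\<forall>n\<ge>nbar. measure M {\<omega> \<in> space M. \<forall>S\<in>Ucal c n.
                 sqrt (lambda_min (gram T \<phi> n (\<lambda>t. X t \<omega>) (S - G \<inter> {1..n}))) \<ge> sqrt c''} \<ge> 1 - \<delta>"
  proof (intro allI impI)
    fix n assume "n \<ge> nbar"
    then obtain S' where S': "S' \<subseteq> {1..n}" "card S' = 2 * c n + CARD('d)"
      and mS': "measure M {\<omega> \<in> space M. \<forall>S''. S'' \<subseteq> S' \<and> card S'' = CARD('d) \<longrightarrow>
                  lambda_min (gram T \<phi> n (\<lambda>t. X t \<omega>) S'') \<ge> c''} \<ge> 1 - \<delta>" using nb by blast
    define Q where "Q \<omega> S w = (\<Sum>k\<in>S. (Tphi T \<phi> n k (\<lambda>t. X t \<omega>) \<bullet> w)^2)" for \<omega> S w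
    define E where "E = {\<omega> \<in> space M. \<forall>S\<in>Ucal c n.
                 sqrt (lambda_min (gram T \<phi> n (\<lambda>t. X t \<omega>) (S - G \<inter> {1..n}))) \<ge> sqrt c''}"
    define E2 where "E2 = {\<omega> \<in> space M. \<forall>S''. S'' \<subseteq> S' \<and> card S'' = CARD('d) \<longrightarrow>
                  lambda_min (gram T \<phi> n (\<lambda>t. X t \<omega>) S'') \<ge> c''}"
    have Eeq: "E = {\<omega> \<in> space M. \<forall>S\<in>Ucal c n. \<forall>w. Q \<omega> (S - G \<inter> {1..n}) w \<ge> c'' * (norm w)^2}"
      unfolding E_def Q_def by (simp add: lmin_gram_iff)
    have finU: "finite (Ucal c n)"
    proof -
      have "Ucal c n \<subseteq> Pow {1..n}" unfolding Ucal_def by auto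
      then show ?thesis by (rule finite_subset) simp
    qed
    have Emeas: "E \<in> sets M" unfolding Eeq
    proof (rule sets.sets_Collect_finite_All)
      fix S assume "S \<in> Ucal c n"
      show "{\<omega> \<in> space M. \<forall>w. Q \<omega> (S - G \<inter> {1..n}) w \<ge> c'' * (norm w)^2} \<in> sets M"
        unfolding Q_def using quad_event_meas[of T X M] T X_meas by simp
    qed (rule finU)
    have sub: "E2 \<subseteq> E"
    proof
      fix \<omega> assume \<omega>: "\<omega> \<in> E2"
      have "\<forall>S\<in>Ucal c n. \<forall>w. Q \<omega> (S - G \<inter> {1..n}) w \<ge> c'' * (norm w)^2"
      proof (intro ballI allI)
        fix S w assume S: "S \<in> Ucal c n"
        then have Ssub: "S \<subseteq> {1..n}" and cS: "int (card S) = int n - int (c n)" unfolding Ucal_def by auto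
        have finS: "finite S" using Ssub finite_subset by blast
        have finS': "finite S'" using S'(1) finite_subset by blast
        have "card (S \<union> S') \<le> n" using card_mono[of "{1..n}" "S \<union> S'"] Ssub S'(1) by auto
        then have "card (S \<inter> S') \<ge> c n + CARD('d)"
          using card_Un_Int[OF finS finS'] cS S'(2) by linarith
        moreover have "card (S \<inter> S') - card (G \<inter> {1..n}) \<le> card ((S \<inter> S') - G \<inter> {1..n})"
          by (rule diff_card_le_card_Diff) simp
        ultimately have "card ((S \<inter> S') - G \<inter> {1..n}) \<ge> CARD('d)" using c[rule_format, of n] by linarith
        then obtain S'' where S'': "S'' \<subseteq> (S \<inter> S') - G \<inter> {1..n}" "card S'' = CARD('d)"
          by (meson obtain_subset_with_card_n)
        then have "lambda_min (gram T \<phi> n (\<lambda>t. X t \<omega>) S'') \<ge> c''" using \<omega> unfolding E2_def by auto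
        then have "Q \<omega> S'' w \<ge> c'' * (norm w)^2" unfolding Q_def by (simp add: lmin_gram_iff)
        also have "Q \<omega> S'' w \<le> Q \<omega> (S - G \<inter> {1..n}) w" unfolding Q_def
          using S''(1) finS by (intro sum_mono2) auto
        finally show "Q \<omega> (S - G \<inter> {1..n}) w \<ge> c'' * (norm w)^2" .
      qed
      then show "\<omega> \<in> E" unfolding Eeq using \<omega> unfolding E2_def by auto
    qed
    have "1 - \<delta> \<le> measure M E2" using mS' unfolding E2_def .
    also have "\<dots> \<le> measure M E" by (rule finite_measure_mono[OF sub Emeas])
    finally show "measure M {\<omega> \<in> space M. \<forall>S\<in>Ucal c n.
                 sqrt (lambda_min (gram T \<phi> n (\<lambda>t. X t \<omega>) (S - G \<inter> {1..n}))) \<ge> sqrt c''} \<ge> 1 - \<delta>"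
      unfolding E_def .
  qed
  then show "\<exists>c'>0. \<exists>nbar. \<forall>n\<ge>nbar.
              measure M {\<omega> \<in> space M. \<forall>S\<in>Ucal c n.
                 sqrt (lambda_min (gram T \<phi> n (\<lambda>t. X t \<omega>) (S - G \<inter> {1..n}))) \<ge> c'} \<ge> 1 - \<delta>"
    using c'' by (intro exI[of _ "sqrt c''"]) auto
qed

abbreviation LL :: "(real \<times> real) measure" where "LL \<equiv> lborel \<Otimes>\<^sub>M lborel"

lemma translate_lborel:
  fixes c :: real assumes "B \<in> sets borel"
  shows "emeasure lborel ((\<lambda>y. y + c) -` B) = emeasure lborel B"
proof -
  have "emeasure lborel B = emeasure (distr lborel borel ((+) c)) B" by (simp add: lborel_distr_plus)
  also have "\<dots> = emeasure lborel ((+) c -` B \<inter> space lborel)" using assms by (simp add: emeasure_distr)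
  also have "(+) c -` B \<inter> space lborel = (\<lambda>y. y + c) -` B" by (auto simp: add.commute)
  finally show ?thesis ..
qed

lemma shear2: "distr LL LL (\<lambda>(x,y). (x, y + a*x)) = LL"
proof (rule measure_eqI)
  fix A assume A: "A \<in> sets (distr LL LL (\<lambda>(x,y). (x, y + a*x)))"
  then have A': "A \<in> sets LL" by simp
  have f: "(\<lambda>(x,y). (x, y + a*x)) \<in> measurable LL LL" by measurable
  have pre: "(\<lambda>(x,y). (x, y + a*x)) -` A \<inter> space LL \<in> sets LL" using f A' by measurable
  have "emeasure (distr LL LL (\<lambda>(x,y). (x, y + a*x))) A = emeasure LL ((\<lambda>(x,y). (x, y + a*x)) -` A \<inter> space LL)"
    using f A' by (simp add: emeasure_distr)
  also have "\<dots> = (\<integral>\<^sup>+x. emeasure lborel (Pair x -` ((\<lambda>(x,y). (x, y + a*x)) -` A \<inter> space LL)) \<partial>lborel)"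
    using pre by (rule lborel.emeasure_pair_measure_alt)
  also have "\<dots> = (\<integral>\<^sup>+x. emeasure lborel (Pair x -` A) \<partial>lborel)"
  proof (rule nn_integral_cong)
    fix x :: real
    have "Pair x -` ((\<lambda>(x,y). (x, y + a*x)) -` A \<inter> space LL) = (\<lambda>y. y + a * x) -` (Pair x -` A)"
      by (auto simp: space_pair_measure)
    moreover have "Pair x -` A \<in> sets borel" using sets_Pair1[OF A'] by simp
    ultimately show "emeasure lborel (Pair x -` ((\<lambda>(x,y). (x, y + a*x)) -` A \<inter> space LL)) = emeasure lborel (Pair x -` A)"
      using translate_lborel by simp
  qed
  also have "\<dots> = emeasure LL A" using lborel.emeasure_pair_measure_alt[OF A'] by simp
  finally show "emeasure (distr LL LL (\<lambda>(x,y). (x, y + a*x))) A = emeasure LL A" .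
qed simp

lemma shear1: "distr LL LL (\<lambda>(x,y). (x + a*y, y)) = LL"
proof (rule measure_eqI)
  have PS: "pair_sigma_finite (lborel::real measure) (lborel::real measure)"
    by (simp add: pair_sigma_finite_def lborel.sigma_finite_measure_axioms)
  fix A assume A: "A \<in> sets (distr LL LL (\<lambda>(x,y). (x + a*y, y)))"
  then have A': "A \<in> sets LL" by simp
  have f: "(\<lambda>(x,y). (x + a*y, y)) \<in> measurable LL LL" by measurable
  have pre: "(\<lambda>(x,y). (x + a*y, y)) -` A \<inter> space LL \<in> sets LL" using f A' by measurable
  have "emeasure (distr LL LL (\<lambda>(x,y). (x + a*y, y))) A = emeasure LL ((\<lambda>(x,y). (x + a*y, y)) -` A \<inter> space LL)"
    using f A' by (simp add: emeasure_distr)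
  also have "\<dots> = (\<integral>\<^sup>+y. emeasure lborel ((\<lambda>x. (x, y)) -` ((\<lambda>(x,y). (x + a*y, y)) -` A \<inter> space LL)) \<partial>lborel)"
    using pre by (rule pair_sigma_finite.emeasure_pair_measure_alt2[OF PS])
  also have "\<dots> = (\<integral>\<^sup>+y. emeasure lborel ((\<lambda>x. (x, y)) -` A) \<partial>lborel)"
  proof (rule nn_integral_cong)
    fix y :: real
    have "(\<lambda>x. (x, y)) -` ((\<lambda>(x,y). (x + a*y, y)) -` A \<inter> space LL) = (\<lambda>x. x + a * y) -` ((\<lambda>x. (x, y)) -` A)"
      by (auto simp: space_pair_measure)
    moreover have "(\<lambda>x. (x, y)) -` A \<in> sets borel" using sets_Pair2[OF A'] by simp
    ultimately show "emeasure lborel ((\<lambda>x. (x, y)) -` ((\<lambda>(x,y). (x + a*y, y)) -` A \<inter> space LL)) = emeasure lborel ((\<lambda>x. (x, y)) -` A)"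
      using translate_lborel by simp
  qed
  also have "\<dots> = emeasure LL A" using pair_sigma_finite.emeasure_pair_measure_alt2[OF PS A'] by simp
  finally show "emeasure (distr LL LL (\<lambda>(x,y). (x + a*y, y))) A = emeasure LL A" .
qed simp

lemma rot_LL:
  fixes c s :: real assumes cs: "c^2 + s^2 = 1" and c1: "1 + c > 0"
  shows "distr LL LL (\<lambda>(x,y). (c*x - s*y, s*x + c*y)) = LL"
proof -
  define t where "t = s / (1 + c)"
  define A where "A = (\<lambda>(x::real,y::real). (x + (-t)*y, y))"
  define B where "B = (\<lambda>(x::real,y::real). (x, y + s*x))"
  have mA: "A \<in> measurable LL LL" unfolding A_def by measurable
  have mB: "B \<in> measurable LL LL" unfolding B_def by measurable
  have ts: "t * s = 1 - c"
  proof -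
    have "t * s = s^2 / (1 + c)" unfolding t_def by (simp add: power2_eq_square)
    also have "\<dots> = (1 - c) * (1 + c) / (1 + c)" using cs by (simp add: algebra_simps power2_eq_square)
    also have "\<dots> = 1 - c" using c1 by simp
    finally show ?thesis .
  qed
  have tc: "t * (1 + c) = s" unfolding t_def using c1 by simp
  have eq: "A \<circ> B \<circ> A = (\<lambda>(x,y). (c*x - s*y, s*x + c*y))"
  proof (rule ext, clarify)
    fix x y :: real
    have "(A \<circ> B \<circ> A) (x, y) = (x - t*y - t*(y + s*(x - t*y)), y + s*(x - t*y))"
      unfolding A_def B_def by simp
    also have "\<dots> = (x * (1 - t * s) - y * (t * (2 - t * s)), s * x + y * (1 - t * s))" by (simp add: algebra_simps)
    also have "\<dots> = (c*x - s*y, s*x + c*y)"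
    proof -
      have h1: "1 - t * s = c" using ts by simp
      have e2: "2 - t * s = 1 + c" using ts by simp
      have h2: "t * (2 - t * s) = s" by (simp only: e2 tc)
      show ?thesis by (simp only: h1 h2) (simp add: algebra_simps)
    qed
    finally show "(A \<circ> B \<circ> A) (x, y) = (c*x - s*y, s*x + c*y)" by simp
  qed
  have dA: "distr LL LL A = LL" unfolding A_def by (rule shear1)
  have dB: "distr LL LL B = LL" unfolding B_def by (rule shear2)
  have "distr LL LL (A \<circ> B \<circ> A) = distr (distr LL LL A) LL (A \<circ> B)"
    using mA mB by (simp add: distr_distr comp_assoc)
  also have "\<dots> = distr LL LL (A \<circ> B)" using dA by simp
  also have "\<dots> = distr (distr LL LL B) LL A" using mA mB by (simp add: distr_distr)
  also have "\<dots> = LL" using dB dA by simp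
  finally show ?thesis using eq by simp
qed

lemma distr_density_inv:
  fixes L :: "'b measure"
  assumes f: "f \<in> measurable L L" and fL: "distr L L f = L"
    and h: "h \<in> borel_measurable L" and hf: "\<And>z. z \<in> space L \<Longrightarrow> h (f z) = h z"
  shows "distr (density L h) (density L h) f = density L h"
proof (rule measure_eqI)
  fix A assume "A \<in> sets (distr (density L h) (density L h) f)"
  then have A: "A \<in> sets L" by simp
  have f': "f \<in> measurable (density L h) (density L h)" using f by simp
  have pre: "f -` A \<inter> space L \<in> sets L" using f A by measurable
  have "emeasure (distr (density L h) (density L h) f) A = emeasure (density L h) (f -` A \<inter> space L)"
    using f' A by (simp add: emeasure_distr)
  also have "\<dots> = (\<integral>\<^sup>+z. h z * indicator (f -` A \<inter> space L) z \<partial>L)" using h pre by (rule emeasure_density)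
  also have "\<dots> = (\<integral>\<^sup>+z. h (f z) * indicator A (f z) \<partial>L)"
    by (rule nn_integral_cong) (auto simp: hf split: split_indicator)
  also have "\<dots> = (\<integral>\<^sup>+w. h w * indicator A w \<partial>(distr L L f))"
    using f h A by (subst nn_integral_distr) auto
  also have "\<dots> = emeasure (density L h) A" using fL h A by (simp add: emeasure_density)
  finally show "emeasure (distr (density L h) (density L h) f) A = emeasure (density L h) A" .
qed simp

abbreviation Nd :: "real \<Rightarrow> real measure" where "Nd \<sigma> \<equiv> density lborel (\<lambda>x. ennreal (normal_density 0 \<sigma> x))"

lemma neg_div_add: "- (a::real) / D + - b / D = - (a + b) / D"
  by (cases "D = 0") (simp_all add: field_simps)

lemma normal_rot_inv:
  fixes c s x y \<sigma> :: real assumes cs: "c^2 + s^2 = 1"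
  shows "normal_density 0 \<sigma> (c*x - s*y) * normal_density 0 \<sigma> (s*x + c*y) = normal_density 0 \<sigma> x * normal_density 0 \<sigma> y"
proof -
  have sq: "(c*x - s*y)^2 + (s*x + c*y)^2 = x^2 + y^2"
  proof -
    have "(c*x - s*y)^2 + (s*x + c*y)^2 = (c^2 + s^2) * (x^2 + y^2)" by (simp add: power2_eq_square algebra_simps)
    then show ?thesis using cs by simp
  qed
  have e: "exp (- ((c*x - s*y)\<^sup>2) / (2*\<sigma>\<^sup>2)) * exp (- ((s*x + c*y)\<^sup>2) / (2*\<sigma>\<^sup>2)) = exp (- (x\<^sup>2) / (2*\<sigma>\<^sup>2)) * exp (- (y\<^sup>2) / (2*\<sigma>\<^sup>2))"
  proof -
    have "- ((c*x - s*y)\<^sup>2) / (2*\<sigma>\<^sup>2) + - ((s*x + c*y)\<^sup>2) / (2*\<sigma>\<^sup>2) = - ((c*x - s*y)\<^sup>2 + (s*x + c*y)\<^sup>2) / (2*\<sigma>\<^sup>2)"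
      by (rule neg_div_add)
    also have "\<dots> = - (x\<^sup>2) / (2*\<sigma>\<^sup>2) + - (y\<^sup>2) / (2*\<sigma>\<^sup>2)" using sq neg_div_add by metis
    finally show ?thesis by (simp add: exp_add[symmetric])
  qed
  show ?thesis unfolding normal_density_def using e by (simp add: algebra_simps)
qed

lemma rot_N:
  fixes c s \<sigma> :: real assumes cs: "c^2 + s^2 = 1" and c1: "1 + c > 0" and \<sigma>: "\<sigma> > 0"
  shows "distr (Nd \<sigma> \<Otimes>\<^sub>M Nd \<sigma>) (Nd \<sigma> \<Otimes>\<^sub>M Nd \<sigma>) (\<lambda>(x,y). (c*x - s*y, s*x + c*y)) = Nd \<sigma> \<Otimes>\<^sub>M Nd \<sigma>"
proof -
  interpret P: prob_space "Nd \<sigma>" using prob_space_normal_density[OF \<sigma>] by simp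
  have NN: "Nd \<sigma> \<Otimes>\<^sub>M Nd \<sigma> = density LL (\<lambda>(x,y). ennreal (normal_density 0 \<sigma> x) * ennreal (normal_density 0 \<sigma> y))"
    by (rule pair_measure_density) (auto intro: P.sigma_finite_measure_axioms lborel.sigma_finite_measure_axioms)
  have "distr (density LL (\<lambda>(x,y). ennreal (normal_density 0 \<sigma> x) * ennreal (normal_density 0 \<sigma> y)))
         (density LL (\<lambda>(x,y). ennreal (normal_density 0 \<sigma> x) * ennreal (normal_density 0 \<sigma> y)))
         (\<lambda>(x,y). (c*x - s*y, s*x + c*y))
      = density LL (\<lambda>(x,y). ennreal (normal_density 0 \<sigma> x) * ennreal (normal_density 0 \<sigma> y))"
  proof (rule distr_density_inv)
    show "(\<lambda>(x,y). (c*x - s*y, s*x + c*y)) \<in> measurable LL LL" by measurable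
    show "distr LL LL (\<lambda>(x,y). (c*x - s*y, s*x + c*y)) = LL" by (rule rot_LL[OF cs c1])
    show "(\<lambda>(x,y). ennreal (normal_density 0 \<sigma> x) * ennreal (normal_density 0 \<sigma> y)) \<in> borel_measurable LL"
      by measurable
    fix z :: "real \<times> real"
    obtain x y where z: "z = (x, y)" by (cases z)
    show "(\<lambda>(x,y). ennreal (normal_density 0 \<sigma> x) * ennreal (normal_density 0 \<sigma> y)) ((\<lambda>(x,y). (c*x - s*y, s*x + c*y)) z)
        = (\<lambda>(x,y). ennreal (normal_density 0 \<sigma> x) * ennreal (normal_density 0 \<sigma> y)) z"
      unfolding z using normal_rot_inv[OF cs, of \<sigma> x y]
      by (simp add: ennreal_mult'[symmetric] normal_density_nonneg)
  qed
  then show ?thesis unfolding NN .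
qed

definition lin :: "nat set \<Rightarrow> (nat \<Rightarrow> nat \<Rightarrow> real) \<Rightarrow> (nat \<Rightarrow> real) \<Rightarrow> (nat \<Rightarrow> real)" where
  "lin I Q x = (\<lambda>k\<in>I. \<Sum>l\<in>I. Q k l * x l)"

definition orth :: "nat set \<Rightarrow> (nat \<Rightarrow> nat \<Rightarrow> real) \<Rightarrow> bool" where
  "orth I Q \<longleftrightarrow> (\<forall>k\<in>I. \<forall>k'\<in>I. (\<Sum>l\<in>I. Q k l * Q k' l) = (if k = k' then 1 else 0))"

definition gmap :: "nat \<Rightarrow> nat \<Rightarrow> real \<Rightarrow> real \<Rightarrow> (nat \<Rightarrow> real) \<Rightarrow> (nat \<Rightarrow> real)" where
  "gmap i j c s x = x(i := c * x i - s * x j, j := s * x i + c * x j)"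

definition colrot :: "(nat \<Rightarrow> nat \<Rightarrow> real) \<Rightarrow> nat \<Rightarrow> nat \<Rightarrow> real \<Rightarrow> real \<Rightarrow> nat \<Rightarrow> nat \<Rightarrow> real" where
  "colrot Q i j c s = (\<lambda>k l. if l = i then c * Q k i + s * Q k j else if l = j then - s * Q k i + c * Q k j else Q k l)"

lemma sum_split2:
  fixes f :: "nat \<Rightarrow> real"
  assumes "finite I" "i \<in> I" "j \<in> I" "i \<noteq> j"
  shows "(\<Sum>l\<in>I. f l) = f i + f j + (\<Sum>l\<in>I - {i, j}. f l)"
proof -
  have "(\<Sum>l\<in>I. f l) = f i + (\<Sum>l\<in>I - {i}. f l)" using assms by (simp add: sum.remove)
  also have "(\<Sum>l\<in>I - {i}. f l) = f j + (\<Sum>l\<in>I - {i} - {j}. f l)" using assms by (intro sum.remove) auto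
  also have "I - {i} - {j} = I - {i, j}" by auto
  finally show ?thesis by (simp add: add.assoc)
qed

lemma lin_colrot:
  assumes "finite I" "i \<in> I" "j \<in> I" "i \<noteq> j"
  shows "lin I (colrot Q i j c s) x = lin I Q (gmap i j c s x)"
proof -
  have "(\<Sum>l\<in>I. colrot Q i j c s k l * x l) = (\<Sum>l\<in>I. Q k l * gmap i j c s x l)" for k
  proof -
    have r1: "(\<Sum>l\<in>I - {i, j}. colrot Q i j c s k l * x l) = (\<Sum>l\<in>I - {i, j}. Q k l * gmap i j c s x l)"
      by (rule sum.cong) (auto simp: colrot_def gmap_def)
    show ?thesis using assms r1
      by (simp add: sum_split2[OF assms] colrot_def gmap_def algebra_simps)
  qed
  then show ?thesis unfolding lin_def by simp
qed

lemma orth_colrot: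
  assumes "finite I" "i \<in> I" "j \<in> I" "i \<noteq> j" "c^2 + s^2 = 1" "orth I Q"
  shows "orth I (colrot Q i j c s)"
  unfolding orth_def
proof (intro ballI)
  fix k k' assume k: "k \<in> I" "k' \<in> I"
  have r1: "(\<Sum>l\<in>I - {i, j}. colrot Q i j c s k l * colrot Q i j c s k' l) = (\<Sum>l\<in>I - {i, j}. Q k l * Q k' l)"
    by (rule sum.cong) (auto simp: colrot_def)
  have r2: "colrot Q i j c s k i * colrot Q i j c s k' i + colrot Q i j c s k j * colrot Q i j c s k' j
      = (c^2 + s^2) * (Q k i * Q k' i + Q k j * Q k' j)"
    using assms(4) by (simp add: colrot_def algebra_simps power2_eq_square)
  have "(\<Sum>l\<in>I. colrot Q i j c s k l * colrot Q i j c s k' l) = (\<Sum>l\<in>I. Q k l * Q k' l)"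
    using r1 r2 assms(5) by (simp add: sum_split2[OF assms(1-4)])
  then show "(\<Sum>l\<in>I. colrot Q i j c s k l * colrot Q i j c s k' l) = (if k = k' then 1 else 0)"
    using assms(6) k unfolding orth_def by simp
qed

lemma distr_conj:
  assumes F: "F \<in> measurable B A" and AF: "distr B A F = A" and f: "f \<in> measurable A A"
    and g: "g \<in> measurable B B" and gB: "distr B B g = B"
    and comm: "\<And>z. z \<in> space B \<Longrightarrow> f (F z) = F (g z)"
  shows "distr A A f = A"
proof -
  have "distr A A f = distr (distr B A F) A f" by (simp only: AF)
  also have "\<dots> = distr B A (f \<circ> F)" using f F by (simp add: distr_distr)
  also have "\<dots> = distr B A (F \<circ> g)" by (rule distr_cong) (auto simp: comm)
  also have "\<dots> = distr (distr B B g) A F" using F g by (simp add: distr_distr)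
  also have "\<dots> = A" by (simp only: gB AF)
  finally show ?thesis .
qed

lemma meas_Nd: "measurable M (Nd \<sigma>) = borel_measurable M"
  by (rule measurable_cong_sets) simp_all

lemma sets_Nd[simp]: "sets (Nd \<sigma>) = sets borel" by simp

context fixes \<sigma> :: real assumes \<sigma>pos: "0 < \<sigma>"
begin

abbreviation \<gamma> :: "nat set \<Rightarrow> (nat \<Rightarrow> real) measure" where "\<gamma> I \<equiv> PiM I (\<lambda>_. Nd \<sigma>)"

lemma N_prob: "prob_space (Nd \<sigma>)" using prob_space_normal_density[OF \<sigma>pos] by simp

lemma PSF: "product_sigma_finite (\<lambda>_::nat. Nd \<sigma>)"
  unfolding product_sigma_finite_def using N_prob prob_space_imp_sigma_finite by blast

lemma PPS: "product_prob_space (\<lambda>_::nat. Nd \<sigma>)"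
  unfolding product_prob_space_def product_prob_space_axioms_def using PSF N_prob by blast

lemma gamma_prob: "prob_space (\<gamma> I)"
  by (rule prob_space_PiM) (rule N_prob)

lemma gamma_sf: "sigma_finite_measure (\<gamma> I)"
  using gamma_prob prob_space_imp_sigma_finite by blast

lemma N_sf: "sigma_finite_measure (Nd \<sigma>)"
  using N_prob prob_space_imp_sigma_finite by blast

lemma lin_meas: "lin I Q \<in> measurable (\<gamma> I) (\<gamma> I)"
  unfolding lin_def
proof (rule measurable_restrict)
  fix k assume "k \<in> I"
  have "(\<lambda>x. \<Sum>l\<in>I. Q k l * x l) \<in> borel_measurable (\<gamma> I)"
  proof (rule borel_measurable_sum)
    fix l assume "l \<in> I"
    then have "(\<lambda>x. x l) \<in> measurable (\<gamma> I) (Nd \<sigma>)" by (rule measurable_component_singleton)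
    then have "(\<lambda>x. x l) \<in> borel_measurable (\<gamma> I)" by (simp add: meas_Nd)
    then show "(\<lambda>x. Q k l * x l) \<in> borel_measurable (\<gamma> I)" by measurable
  qed
  then show "(\<lambda>x. \<Sum>l\<in>I. Q k l * x l) \<in> measurable (\<gamma> I) (Nd \<sigma>)" by (simp add: meas_Nd)
qed

lemma comp_meas: "k \<in> I \<Longrightarrow> (\<lambda>x. x k) \<in> borel_measurable (\<gamma> I)"
  using measurable_component_singleton[of k I "\<lambda>_. Nd \<sigma>"] by (simp add: meas_Nd)

lemma gmap_meas:
  assumes "i \<in> I" "j \<in> I"
  shows "gmap i j c s \<in> measurable (\<gamma> I) (\<gamma> I)"
proof -
  have "(\<lambda>x. \<lambda>k\<in>I. gmap i j c s x k) \<in> measurable (\<gamma> I) (\<gamma> I)"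
  proof (rule measurable_restrict)
    fix k assume k: "k \<in> I"
    have "(\<lambda>x. gmap i j c s x k) \<in> borel_measurable (\<gamma> I)"
      unfolding gmap_def using comp_meas[OF assms(1)] comp_meas[OF assms(2)] comp_meas[OF k]
      by (cases "k = j"; cases "k = i") (simp_all, measurable)
    then show "(\<lambda>x. gmap i j c s x k) \<in> measurable (\<gamma> I) (Nd \<sigma>)" by (simp add: meas_Nd)
  qed
  moreover have "(\<lambda>k\<in>I. gmap i j c s x k) = gmap i j c s x" if "x \<in> space (\<gamma> I)" for x
    using that assms by (auto simp: gmap_def space_PiM PiE_def extensional_def)
  ultimately show ?thesis by (simp cong: measurable_cong)
qed

end

context fixes \<sigma> :: real assumes \<sigma>pos: "0 < \<sigma>"
begin

abbreviation NN where "NN \<equiv> Nd \<sigma> \<Otimes>\<^sub>M Nd \<sigma>"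

lemma emb_meas:
  "(\<lambda>(x,y). \<lambda>k\<in>{i,j}. if k = i then x else (y::real)) \<in> measurable NN (\<gamma> \<sigma> {i,j})"
proof -
  have "(\<lambda>p. \<lambda>k\<in>{i,j}. (if k = i then fst p else snd p)) \<in> measurable NN (\<gamma> \<sigma> {i,j})"
  proof (rule measurable_restrict)
    fix k assume "k \<in> {i,j}"
    show "(\<lambda>p. if k = i then fst p else snd p) \<in> measurable NN (Nd \<sigma>)"
      by (cases "k = i") simp_all
  qed
  moreover have "(\<lambda>(x,y). \<lambda>k\<in>{i,j}. if k = i then x else (y::real)) = (\<lambda>p. \<lambda>k\<in>{i,j}. (if k = i then fst p else snd p))"
    by (auto simp: fun_eq_iff)
  ultimately show ?thesis by simp
qed

lemma emb_distr:
  assumes ij: "i \<noteq> j"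
  shows "distr NN (\<gamma> \<sigma> {i,j}) (\<lambda>(x,y). \<lambda>k\<in>{i,j}. if k = i then x else y) = \<gamma> \<sigma> {i,j}"
proof (rule product_sigma_finite.PiM_eqI[OF PSF[OF \<sigma>pos]])
  show "finite {i,j}" by simp
  show "sets (distr NN (\<gamma> \<sigma> {i,j}) (\<lambda>(x,y). \<lambda>k\<in>{i,j}. if k = i then x else y)) = sets (\<gamma> \<sigma> {i,j})" by simp
  fix A assume A: "\<And>k. k \<in> {i,j} \<Longrightarrow> A k \<in> sets (Nd \<sigma>)"
  have pre: "(\<lambda>(x,y). \<lambda>k\<in>{i,j}. if k = i then x else y) -` (\<Pi>\<^sub>E k\<in>{i,j}. A k) \<inter> space NN = A i \<times> A j"
    using ij by (auto simp: space_pair_measure PiE_def Pi_def extensional_def)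
  interpret S: sigma_finite_measure "Nd \<sigma>" by (rule N_sf[OF \<sigma>pos])
  have "emeasure (distr NN (\<gamma> \<sigma> {i,j}) (\<lambda>(x,y). \<lambda>k\<in>{i,j}. if k = i then x else y)) (\<Pi>\<^sub>E k\<in>{i,j}. A k)
      = emeasure NN (A i \<times> A j)"
    using A by (subst emeasure_distr[OF emb_meas]) (auto simp: pre intro!: sets_PiM_I_finite)
  also have "\<dots> = emeasure (Nd \<sigma>) (A i) * emeasure (Nd \<sigma>) (A j)"
    using A by (intro S.emeasure_pair_measure_Times) auto
  also have "\<dots> = (\<Prod>k\<in>{i,j}. emeasure (Nd \<sigma>) (A k))" using ij by simp
  finally show "emeasure (distr NN (\<gamma> \<sigma> {i,j}) (\<lambda>(x,y). \<lambda>k\<in>{i,j}. if k = i then x else y)) (\<Pi>\<^sub>E k\<in>{i,j}. A k)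
      = (\<Prod>k\<in>{i,j}. emeasure (Nd \<sigma>) (A k))" .
qed

lemma givens:
  assumes I: "finite I" "i \<in> I" "j \<in> I" "i \<noteq> j" and cs: "c^2 + s^2 = 1" "1 + c > 0"
  shows "distr (\<gamma> \<sigma> I) (\<gamma> \<sigma> I) (gmap i j c s) = \<gamma> \<sigma> I"
proof -
  define K where "K = I - {i,j}"
  define emb where "emb = (\<lambda>(x,y). \<lambda>k\<in>{i,j}. if k = i then x else (y::real))"
  define H where "H = (\<lambda>(p, X). (emb p, X::nat \<Rightarrow> real))"
  define F where "F = merge {i,j} K \<circ> H"
  define \<rho> where "\<rho> = (\<lambda>(x::real,y::real). (c*x - s*y, s*x + c*y))"
  define g where "g = (\<lambda>(p, X). (\<rho> p, X::nat \<Rightarrow> real))"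
  have IK: "{i,j} \<union> K = I" using I unfolding K_def by auto
  have disj: "{i,j} \<inter> K = {}" unfolding K_def by auto
  have finK: "finite K" using I unfolding K_def by auto
  interpret GK: sigma_finite_measure "\<gamma> \<sigma> K" by (rule gamma_sf[OF \<sigma>pos])
  interpret NN: sigma_finite_measure NN
    using prob_space_imp_sigma_finite prob_space_pair N_prob[OF \<sigma>pos] by blast
  have memb: "emb \<in> measurable NN (\<gamma> \<sigma> {i,j})" unfolding emb_def by (rule emb_meas)
  have mH: "H \<in> measurable (NN \<Otimes>\<^sub>M \<gamma> \<sigma> K) (\<gamma> \<sigma> {i,j} \<Otimes>\<^sub>M \<gamma> \<sigma> K)"
    unfolding H_def using memb by measurable
  have mmerge: "merge {i,j} K \<in> measurable (\<gamma> \<sigma> {i,j} \<Otimes>\<^sub>M \<gamma> \<sigma> K) (\<gamma> \<sigma> I)"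
    using measurable_merge[of "{i,j}" K "\<lambda>_. Nd \<sigma>"] IK by simp
  have mF: "F \<in> measurable (NN \<Otimes>\<^sub>M \<gamma> \<sigma> K) (\<gamma> \<sigma> I)" unfolding F_def using mH mmerge by (rule measurable_comp)
  have dH: "distr (NN \<Otimes>\<^sub>M \<gamma> \<sigma> K) (\<gamma> \<sigma> {i,j} \<Otimes>\<^sub>M \<gamma> \<sigma> K) H = \<gamma> \<sigma> {i,j} \<Otimes>\<^sub>M \<gamma> \<sigma> K"
  proof -
    have "distr NN (\<gamma> \<sigma> {i,j}) emb \<Otimes>\<^sub>M distr (\<gamma> \<sigma> K) (\<gamma> \<sigma> K) (\<lambda>X. X)
        = distr (NN \<Otimes>\<^sub>M \<gamma> \<sigma> K) (\<gamma> \<sigma> {i,j} \<Otimes>\<^sub>M \<gamma> \<sigma> K) (\<lambda>(x, y). (emb x, y))"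
      by (rule pair_measure_distr[OF memb measurable_ident_sets[OF refl]]) (simp add: gamma_sf[OF \<sigma>pos])
    moreover have "distr NN (\<gamma> \<sigma> {i,j}) emb = \<gamma> \<sigma> {i,j}" unfolding emb_def by (rule emb_distr[OF I(4)])
    ultimately show ?thesis unfolding H_def by simp
  qed
  have AF: "distr (NN \<Otimes>\<^sub>M \<gamma> \<sigma> K) (\<gamma> \<sigma> I) F = \<gamma> \<sigma> I"
  proof -
    have "distr (NN \<Otimes>\<^sub>M \<gamma> \<sigma> K) (\<gamma> \<sigma> I) F = distr (distr (NN \<Otimes>\<^sub>M \<gamma> \<sigma> K) (\<gamma> \<sigma> {i,j} \<Otimes>\<^sub>M \<gamma> \<sigma> K) H) (\<gamma> \<sigma> I) (merge {i,j} K)"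
      unfolding F_def using mH mmerge by (simp add: distr_distr)
    also have "\<dots> = distr (\<gamma> \<sigma> {i,j} \<Otimes>\<^sub>M \<gamma> \<sigma> K) (\<gamma> \<sigma> I) (merge {i,j} K)" by (simp only: dH)
    also have "\<dots> = \<gamma> \<sigma> I"
      using product_sigma_finite.distr_merge[OF PSF[OF \<sigma>pos] disj _ finK] IK by simp
    finally show ?thesis .
  qed
  have m\<rho>: "\<rho> \<in> measurable NN NN" unfolding \<rho>_def by measurable
  have mg: "g \<in> measurable (NN \<Otimes>\<^sub>M \<gamma> \<sigma> K) (NN \<Otimes>\<^sub>M \<gamma> \<sigma> K)" unfolding g_def using m\<rho> by measurable
  have gB: "distr (NN \<Otimes>\<^sub>M \<gamma> \<sigma> K) (NN \<Otimes>\<^sub>M \<gamma> \<sigma> K) g = NN \<Otimes>\<^sub>M \<gamma> \<sigma> K"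
  proof -
    have "distr NN NN \<rho> \<Otimes>\<^sub>M distr (\<gamma> \<sigma> K) (\<gamma> \<sigma> K) (\<lambda>X. X)
        = distr (NN \<Otimes>\<^sub>M \<gamma> \<sigma> K) (NN \<Otimes>\<^sub>M \<gamma> \<sigma> K) (\<lambda>(x, y). (\<rho> x, y))"
      by (rule pair_measure_distr[OF m\<rho> measurable_ident_sets[OF refl]]) (simp add: gamma_sf[OF \<sigma>pos])
    moreover have "distr NN NN \<rho> = NN" unfolding \<rho>_def by (rule rot_N[OF cs \<sigma>pos])
    ultimately show ?thesis unfolding g_def by simp
  qed
  have comm: "gmap i j c s (F z) = F (g z)" for z
  proof -
    obtain x y X where z: "z = ((x, y), X)" by (metis prod.collapse)
    show ?thesis unfolding z F_def H_def g_def emb_def \<rho>_def gmap_def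
      using I(4) by (auto simp: merge_def K_def fun_eq_iff)
  qed
  show ?thesis
    by (rule distr_conj[OF mF AF gmap_meas[OF \<sigma>pos I(2,3)] mg gB]) (rule comm)
qed

end

context fixes \<sigma> :: real assumes \<sigma>pos: "0 < \<sigma>"
begin

lemma scale_N:
  assumes a: "a^2 = (1::real)"
  shows "distr (Nd \<sigma>) (Nd \<sigma>) (\<lambda>x. a * x) = Nd \<sigma>"
proof -
  interpret P: prob_space "Nd \<sigma>" by (rule N_prob[OF \<sigma>pos])
  have a0: "a \<noteq> 0" using a by auto
  have aa: "\<bar>a\<bar> = 1" using a by (auto simp: power2_eq_1_iff)
  have d: "distributed (Nd \<sigma>) lborel (\<lambda>x. x) (normal_density 0 \<sigma>)"
    unfolding distributed_def
  proof (intro conjI)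
    show "distr (Nd \<sigma>) lborel (\<lambda>x. x) = density lborel (normal_density 0 \<sigma>)"
    proof -
      have "distr (Nd \<sigma>) lborel (\<lambda>x. x) = distr (Nd \<sigma>) (Nd \<sigma>) (\<lambda>x. x)" by (rule distr_cong) simp_all
      then show ?thesis by simp
    qed
  qed simp_all
  have "distributed (Nd \<sigma>) lborel (\<lambda>x. 0 + a * x) (normal_density (0 + a * 0) (\<bar>a\<bar> * \<sigma>))"
    by (rule P.normal_density_affine[OF d \<sigma>pos a0])
  then have "distr (Nd \<sigma>) lborel (\<lambda>x. a * x) = Nd \<sigma>" using aa unfolding distributed_def by simp
  moreover have "distr (Nd \<sigma>) (Nd \<sigma>) (\<lambda>x. a * x) = distr (Nd \<sigma>) lborel (\<lambda>x. a * x)" by (rule distr_cong) simp_all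
  ultimately show ?thesis by simp
qed

lemma upd_meas:
  "(\<lambda>(x, X). X(i0 := x)) \<in> measurable (Nd \<sigma> \<Otimes>\<^sub>M \<gamma> \<sigma> J) (\<gamma> \<sigma> (insert i0 J))"
proof -
  have "(\<lambda>z. \<lambda>k\<in>insert i0 J. if k = i0 then fst z else snd z k) \<in> measurable (Nd \<sigma> \<Otimes>\<^sub>M \<gamma> \<sigma> J) (\<gamma> \<sigma> (insert i0 J))"
  proof (rule measurable_restrict)
    fix k assume k: "k \<in> insert i0 J"
    show "(\<lambda>z. if k = i0 then fst z else snd z k) \<in> measurable (Nd \<sigma> \<Otimes>\<^sub>M \<gamma> \<sigma> J) (Nd \<sigma>)"
    proof (cases "k = i0")
      case True then show ?thesis by simp
    next
      case False
      then have "k \<in> J" using k by simp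
      then show ?thesis using False by simp
    qed
  qed
  moreover have "(\<lambda>k\<in>insert i0 J. if k = i0 then fst z else snd z k) = (\<lambda>(x, X). X(i0 := x)) z"
    if "z \<in> space (Nd \<sigma> \<Otimes>\<^sub>M \<gamma> \<sigma> J)" for z
    using that by (auto simp: space_pair_measure space_PiM PiE_def extensional_def fun_eq_iff)
  ultimately show ?thesis by (simp cong: measurable_cong)
qed

lemma KEY:
  assumes "finite I" "orth I Q"
  shows "distr (\<gamma> \<sigma> I) (\<gamma> \<sigma> I) (lin I Q) = \<gamma> \<sigma> I"
  using assms
proof (induction I arbitrary: Q rule: finite_induct)
  case empty
  have "distr (\<gamma> \<sigma> {}) (\<gamma> \<sigma> {}) (lin {} Q) = distr (\<gamma> \<sigma> {}) (\<gamma> \<sigma> {}) (\<lambda>x. x)"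
    by (rule distr_cong) (auto simp: lin_def space_PiM)
  then show ?case by simp
next
  case (insert i0 J)
  define I where "I = insert i0 J"
  have finI: "finite I" using insert unfolding I_def by simp
  have main: "\<forall>Q. card {l\<in>J. Q i0 l \<noteq> 0} = m \<longrightarrow> orth I Q \<longrightarrow> distr (\<gamma> \<sigma> I) (\<gamma> \<sigma> I) (lin I Q) = \<gamma> \<sigma> I" for m
  proof (induction m rule: less_induct)
    case (less m)
    show ?case
    proof (intro allI impI)
      fix Q assume cm: "card {l\<in>J. Q i0 l \<noteq> 0} = m" and oQ: "orth I Q"
      show "distr (\<gamma> \<sigma> I) (\<gamma> \<sigma> I) (lin I Q) = \<gamma> \<sigma> I"
      proof (cases "{l\<in>J. Q i0 l \<noteq> 0} = {}")
        case True
        then have z: "\<And>l. l \<in> J \<Longrightarrow> Q i0 l = 0" by auto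
        define a where "a = Q i0 i0"
        have "(\<Sum>l\<in>I. Q i0 l * Q i0 l) = 1" using oQ unfolding orth_def I_def by auto
        then have a2: "a^2 = 1" using insert(1,2) z unfolding I_def a_def by (simp add: power2_eq_square)
        have zc: "Q k i0 = 0" if k: "k \<in> J" for k
        proof -
          have "k \<noteq> i0" using k insert(2) by auto
          then have "(\<Sum>l\<in>I. Q k l * Q i0 l) = 0" using oQ k unfolding orth_def I_def by auto
          then have "Q k i0 * a = 0" using insert(1,2) z unfolding I_def a_def by simp
          then show ?thesis using a2 by auto
        qed
        have oJ: "orth J Q" unfolding orth_def
        proof (intro ballI)
          fix k k' assume k: "k \<in> J" "k' \<in> J"
          have "(\<Sum>l\<in>I. Q k l * Q k' l) = (if k = k' then 1 else 0)" using oQ k unfolding orth_def I_def by auto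
          then show "(\<Sum>l\<in>J. Q k l * Q k' l) = (if k = k' then 1 else 0)"
            using insert(1,2) zc k unfolding I_def by simp
        qed
        have IHJ: "distr (\<gamma> \<sigma> J) (\<gamma> \<sigma> J) (lin J Q) = \<gamma> \<sigma> J" by (rule insert.IH[OF oJ])
        define F where "F = (\<lambda>(x::real, X::nat \<Rightarrow> real). X(i0 := x))"
        define g where "g = (\<lambda>(x::real, X::nat \<Rightarrow> real). (a * x, lin J Q X))"
        have mF: "F \<in> measurable (Nd \<sigma> \<Otimes>\<^sub>M \<gamma> \<sigma> J) (\<gamma> \<sigma> I)" unfolding F_def I_def by (rule upd_meas)
        have AF: "distr (Nd \<sigma> \<Otimes>\<^sub>M \<gamma> \<sigma> J) (\<gamma> \<sigma> I) F = \<gamma> \<sigma> I"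
          unfolding F_def I_def by (rule distr_pair_PiM_eq_PiM) (simp_all add: N_prob[OF \<sigma>pos])
        have mlin: "lin J Q \<in> measurable (\<gamma> \<sigma> J) (\<gamma> \<sigma> J)" by (rule lin_meas[OF \<sigma>pos])
        have msc: "(\<lambda>x. a * x) \<in> measurable (Nd \<sigma>) (Nd \<sigma>)" by (simp add: meas_Nd)
        have mg: "g \<in> measurable (Nd \<sigma> \<Otimes>\<^sub>M \<gamma> \<sigma> J) (Nd \<sigma> \<Otimes>\<^sub>M \<gamma> \<sigma> J)"
          unfolding g_def using mlin msc by measurable
        have gB: "distr (Nd \<sigma> \<Otimes>\<^sub>M \<gamma> \<sigma> J) (Nd \<sigma> \<Otimes>\<^sub>M \<gamma> \<sigma> J) g = Nd \<sigma> \<Otimes>\<^sub>M \<gamma> \<sigma> J"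
        proof -
          have "distr (Nd \<sigma>) (Nd \<sigma>) (\<lambda>x. a * x) \<Otimes>\<^sub>M distr (\<gamma> \<sigma> J) (\<gamma> \<sigma> J) (lin J Q)
              = distr (Nd \<sigma> \<Otimes>\<^sub>M \<gamma> \<sigma> J) (Nd \<sigma> \<Otimes>\<^sub>M \<gamma> \<sigma> J) (\<lambda>(x, y). (a * x, lin J Q y))"
            by (rule pair_measure_distr[OF msc mlin]) (simp add: IHJ gamma_sf[OF \<sigma>pos])
          then show ?thesis using IHJ scale_N[OF a2] unfolding g_def by simp
        qed
        have comm: "lin I Q (F z) = F (g z)" for z
        proof -
          obtain x X where zz: "z = (x, X)" by (cases z)
          have "lin I Q (X(i0 := x)) = (lin J Q X)(i0 := a * x)"
          proof (rule ext)
            fix k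
            show "lin I Q (X(i0 := x)) k = ((lin J Q X)(i0 := a * x)) k"
            proof (cases "k = i0")
              case True
              have "(\<Sum>l\<in>J. Q i0 l * (X(i0 := x)) l) = 0" using z by simp
              then show ?thesis using True insert(1,2) unfolding lin_def I_def a_def by simp
            next
              case False
              show ?thesis
              proof (cases "k \<in> J")
                case True
                have "(\<Sum>l\<in>J. Q k l * (X(i0 := x)) l) = (\<Sum>l\<in>J. Q k l * X l)"
                  using insert(2) by (intro sum.cong) auto
                then show ?thesis using True False insert(1,2) zc[OF True] unfolding lin_def I_def by simp
              next
                case F2: False
                then show ?thesis using False unfolding lin_def I_def by simp
              qed
            qed
          qed
          then show ?thesis unfolding zz F_def g_def by simp
        qed
        show ?thesis by (rule distr_conj[OF mF AF lin_meas[OF \<sigma>pos] mg gB]) (rule comm)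
      next
        case False
        then obtain j where j: "j \<in> J" "Q i0 j \<noteq> 0" by auto
        have ij: "i0 \<noteq> j" using j insert(2) by auto
        have jI: "j \<in> I" "i0 \<in> I" using j unfolding I_def by auto
        define a where "a = Q i0 i0"
        define b where "b = Q i0 j"
        define r where "r = (if a < 0 then - sqrt (a^2 + b^2) else sqrt (a^2 + b^2))"
        have b0: "b \<noteq> 0" using j b_def by simp
        have pos: "a^2 + b^2 > 0" using b0 by (simp add: add_nonneg_pos)
        have r2: "r^2 = a^2 + b^2" unfolding r_def using pos by auto
        have r0: "r \<noteq> 0" using r2 pos by auto
        define c where "c = a / r"
        define s where "s = b / r"
        have cs: "c^2 + s^2 = 1" unfolding c_def s_def using r2 r0 b0 by (simp add: power_divide add_divide_distrib[symmetric])
        have c0: "c \<ge> 0"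
        proof (cases "a < 0")
          case True
          then have "r < 0" unfolding r_def using pos by simp
          then show ?thesis unfolding c_def using True by (simp add: divide_neg_neg less_imp_le)
        next
          case False
          then have "r > 0" unfolding r_def using pos by simp
          then show ?thesis unfolding c_def using False by simp
        qed
        then have c1: "1 + c > 0" by simp
        define Q' where "Q' = colrot Q i0 j c s"
        have Q'j: "Q' i0 j = 0"
        proof -
          have "Q' i0 j = - s * a + c * b" unfolding Q'_def colrot_def a_def b_def using ij by simp
          also have "\<dots> = 0" unfolding c_def s_def by (simp add: algebra_simps)
          finally show ?thesis .
        qed
        have Q'l: "Q' i0 l = Q i0 l" if "l \<in> J" "l \<noteq> j" for l
          unfolding Q'_def colrot_def using that insert(2) by auto
        have setQ': "{l\<in>J. Q' i0 l \<noteq> 0} = {l\<in>J. Q i0 l \<noteq> 0} - {j}"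
        proof (rule set_eqI)
          fix l show "l \<in> {l\<in>J. Q' i0 l \<noteq> 0} \<longleftrightarrow> l \<in> {l\<in>J. Q i0 l \<noteq> 0} - {j}"
            using Q'j Q'l[of l] by (cases "l = j") auto
        qed
        have lt: "card {l\<in>J. Q' i0 l \<noteq> 0} < m"
          unfolding setQ' cm[symmetric] using j insert(1) by (intro card_Diff1_less) auto
        have oQ': "orth I Q'" unfolding Q'_def by (rule orth_colrot[OF finI jI(2) jI(1) ij cs oQ])
        have d': "distr (\<gamma> \<sigma> I) (\<gamma> \<sigma> I) (lin I Q') = \<gamma> \<sigma> I" using less.IH[OF lt] oQ' by blast
        have eq: "lin I Q' = lin I Q \<circ> gmap i0 j c s"
          unfolding Q'_def using lin_colrot[OF finI jI(2) jI(1) ij] by (simp add: fun_eq_iff)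
        have "distr (\<gamma> \<sigma> I) (\<gamma> \<sigma> I) (lin I Q) = distr (distr (\<gamma> \<sigma> I) (\<gamma> \<sigma> I) (gmap i0 j c s)) (\<gamma> \<sigma> I) (lin I Q)"
          by (simp only: givens[OF \<sigma>pos finI jI(2) jI(1) ij cs c1])
        also have "\<dots> = distr (\<gamma> \<sigma> I) (\<gamma> \<sigma> I) (lin I Q')"
          unfolding eq by (rule distr_distr[OF lin_meas[OF \<sigma>pos] gmap_meas[OF \<sigma>pos jI(2) jI(1)]])
        also have "\<dots> = \<gamma> \<sigma> I" by (rule d')
        finally show ?thesis .
      qed
    qed
  qed
  have oI: "orth I Q" using insert.prems unfolding I_def .
  show ?case using main[of "card {l\<in>J. Q i0 l \<noteq> 0}", rule_format, OF refl oI] unfolding I_def .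
qed

end

lemma indep_vars_empty: "prob_space M \<Longrightarrow> prob_space.indep_vars M M' X {}"
  by (simp add: prob_space.indep_vars_def prob_space.indep_sets_def)

lemma sPi: "sets (PiM I (\<lambda>_. Nd \<sigma>)) = sets (PiM I (\<lambda>_. borel))" by (rule sets_PiM_cong) simp_all

lemma tt_range:
  assumes "T > 0" "l \<in> {1..n}"
  shows "T * real l / real n \<in> {0..T}"
proof -
  have "T * real l \<le> T * real n" using assms by (intro mult_left_mono) auto
  then show ?thesis using assms by (auto simp: field_simps)
qed

lemma tt_inj:
  assumes "T > 0" "n > 0"
  shows "inj_on (\<lambda>l. T * real l / real n) {1..n}"
  using assms by (auto simp: inj_on_def field_simps)

lemma Tphi_real: "Tphi T \<phi> n k (\<lambda>t. \<eta> t \<omega>) = (1 / real n) * (\<Sum>l\<in>{1..n}. \<phi> k (T * real l / real n) * \<eta> (T * real l / real n) \<omega>)"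
  unfolding Tphi_def by simp

lemma part2_pos:
  fixes M :: "'a measure" and \<eta> :: "real \<Rightarrow> 'a \<Rightarrow> real"
  assumes M: "prob_space M" and T: "T > 0" and n: "n > 0" and \<sigma>: "\<sigma> > 0"
    and \<eta>_indep: "prob_space.indep_vars M (\<lambda>_. borel) \<eta> {0..T}"
    and \<eta>_d: "\<And>t. t \<in> {0..T} \<Longrightarrow> distr M borel (\<eta> t) = Nd \<sigma>"
    and A1: "\<And>l k. 1 \<le> l \<and> l \<le> n \<and> 1 \<le> k \<and> k \<le> n \<Longrightarrow>
               (1 / real n) * (\<Sum>j=1..n. \<phi> l (T * real j / real n) * \<phi> k (T * real j / real n))
               = (if l = k then 1 else 0)"
  shows "prob_space.indep_vars M (\<lambda>_. borel) (\<lambda>k \<omega>. Tphi T \<phi> n k (\<lambda>t. \<eta> t \<omega>)) {1..n}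
      \<and> (\<forall>k\<in>{1..n}. distr M borel (\<lambda>\<omega>. Tphi T \<phi> n k (\<lambda>t. \<eta> t \<omega>)) = Nd (\<sigma> / sqrt (real n)))"
proof -
  interpret prob_space M by (rule M)
  define I where "I = {1..n}"
  define tt where "tt l = T * real l / real n" for l
  have ttI: "tt l \<in> {0..T}" if "l \<in> I" for l using tt_range[OF T] that unfolding tt_def I_def by simp
  have I0: "I \<noteq> {}" using n unfolding I_def by auto
  have finI: "finite I" unfolding I_def by simp
  have rv: "random_variable borel (\<eta> t)" if "t \<in> {0..T}" for t
    using \<eta>_indep that unfolding indep_vars_def by auto
  define etaV where "etaV \<omega> = (\<lambda>s\<in>{0..T}. \<eta> s \<omega>)" for \<omega>
  define xiV where "xiV \<omega> = (\<lambda>l\<in>I. \<eta> (tt l) \<omega>)" for \<omega>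
  have T0: "{0..T} \<noteq> {}" using T by auto
  have d1: "distr M (PiM {0..T} (\<lambda>_. borel)) etaV = PiM {0..T} (\<lambda>s. distr M borel (\<eta> s))"
    using indep_vars_iff_distr_eq_PiM'[OF T0 rv] \<eta>_indep unfolding etaV_def by simp
  also have "\<dots> = PiM {0..T} (\<lambda>_. Nd \<sigma>)" by (rule PiM_cong) (simp_all add: \<eta>_d)
  finally have d1': "distr M (PiM {0..T} (\<lambda>_. borel)) etaV = PiM {0..T} (\<lambda>_. Nd \<sigma>)" .
  have metaV: "etaV \<in> measurable M (PiM {0..T} (\<lambda>_. Nd \<sigma>))"
  proof -
    have "etaV \<in> measurable M (PiM {0..T} (\<lambda>_. borel))" unfolding etaV_def
      by (rule measurable_restrict) (rule rv)
    moreover have "measurable M (PiM {0..T} (\<lambda>_. borel)) = measurable M (PiM {0..T} (\<lambda>_. Nd \<sigma>))"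
      by (rule measurable_cong_sets[OF refl]) (rule sets_PiM_cong, simp_all)
    ultimately show ?thesis by simp
  qed
  have d1'': "distr M (PiM {0..T} (\<lambda>_. Nd \<sigma>)) etaV = PiM {0..T} (\<lambda>_. Nd \<sigma>)"
  proof -
    have "distr M (PiM {0..T} (\<lambda>_. Nd \<sigma>)) etaV = distr M (PiM {0..T} (\<lambda>_. borel)) etaV"
      by (rule distr_cong) (simp_all add: sPi)
    then show ?thesis using d1' by simp
  qed
  define R where "R \<omega>' = (\<lambda>l\<in>I. \<omega>' (tt l))" for \<omega>' :: "real \<Rightarrow> real"
  have reidx: "distr (PiM {0..T} (\<lambda>_. Nd \<sigma>)) (\<gamma> \<sigma> I) R = \<gamma> \<sigma> I"
    unfolding R_def using distr_PiM_reindex[of "{0..T}" "\<lambda>_. Nd \<sigma>" tt I] N_prob[OF \<sigma>] tt_inj[OF T n] ttI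
    unfolding tt_def I_def by (auto simp: Pi_def)
  have mR: "R \<in> measurable (PiM {0..T} (\<lambda>_. Nd \<sigma>)) (\<gamma> \<sigma> I)" unfolding R_def
    by (rule measurable_restrict) (rule measurable_component_singleton, rule ttI)
  have xi_eq: "xiV = R \<circ> etaV" using ttI unfolding xiV_def R_def etaV_def by (auto simp: fun_eq_iff)
  have mxi: "xiV \<in> measurable M (\<gamma> \<sigma> I)" unfolding xi_eq using metaV mR by (rule measurable_comp)
  have dxi: "distr M (\<gamma> \<sigma> I) xiV = \<gamma> \<sigma> I"
  proof -
    have "distr M (\<gamma> \<sigma> I) xiV = distr (distr M (PiM {0..T} (\<lambda>_. Nd \<sigma>)) etaV) (\<gamma> \<sigma> I) R"
      unfolding xi_eq using mR metaV by (simp add: distr_distr)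
    then show ?thesis using d1'' reidx by simp
  qed
  define Q where "Q k l = \<phi> k (tt l) / sqrt (real n)" for k l
  have oQ: "orth I Q" unfolding orth_def
  proof (intro ballI)
    fix k k' assume k: "k \<in> I" "k' \<in> I"
    have "(\<Sum>l\<in>I. Q k l * Q k' l) = (1 / real n) * (\<Sum>j=1..n. \<phi> k (T * real j / real n) * \<phi> k' (T * real j / real n))"
      unfolding Q_def tt_def I_def using n by (simp add: sum_distrib_left field_simps)
    also have "\<dots> = (if k = k' then 1 else 0)" using A1[of k k'] k unfolding I_def by simp
    finally show "(\<Sum>l\<in>I. Q k l * Q k' l) = (if k = k' then 1 else 0)" .
  qed
  define \<zeta> where "\<zeta> k \<omega> = (\<Sum>l\<in>I. Q k l * \<eta> (tt l) \<omega>)" for k \<omega>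
  have zV: "(\<lambda>\<omega>. \<lambda>k\<in>I. \<zeta> k \<omega>) = lin I Q \<circ> xiV"
    unfolding \<zeta>_def lin_def xiV_def by (auto simp: fun_eq_iff)
  have mz: "(\<lambda>\<omega>. \<lambda>k\<in>I. \<zeta> k \<omega>) \<in> measurable M (\<gamma> \<sigma> I)"
    unfolding zV using mxi lin_meas[OF \<sigma>] by (rule measurable_comp)
  have dz: "distr M (\<gamma> \<sigma> I) (\<lambda>\<omega>. \<lambda>k\<in>I. \<zeta> k \<omega>) = \<gamma> \<sigma> I"
  proof -
    have "distr M (\<gamma> \<sigma> I) (\<lambda>\<omega>. \<lambda>k\<in>I. \<zeta> k \<omega>) = distr (distr M (\<gamma> \<sigma> I) xiV) (\<gamma> \<sigma> I) (lin I Q)"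
      unfolding zV using mxi lin_meas[OF \<sigma>] by (simp add: distr_distr)
    then show ?thesis using dxi KEY[OF \<sigma> finI oQ] by simp
  qed
  have rvz: "random_variable borel (\<zeta> k)" if "k \<in> I" for k
  proof -
    have "(\<lambda>x. x k) \<circ> (\<lambda>\<omega>. \<lambda>k\<in>I. \<zeta> k \<omega>) \<in> measurable M (Nd \<sigma>)"
      by (rule measurable_comp[OF mz measurable_component_singleton[OF that]])
    moreover have "(\<lambda>x. x k) \<circ> (\<lambda>\<omega>. \<lambda>k\<in>I. \<zeta> k \<omega>) = \<zeta> k" using that by (auto simp: fun_eq_iff)
    ultimately show ?thesis by (simp add: meas_Nd)
  qed
  have dzk: "distr M borel (\<zeta> k) = Nd \<sigma>" if k: "k \<in> I" for k
  proof -
    have "distr M borel (\<zeta> k) = distr M (Nd \<sigma>) ((\<lambda>x. x k) \<circ> (\<lambda>\<omega>. \<lambda>k\<in>I. \<zeta> k \<omega>))"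
      by (rule distr_cong) (auto simp: k)
    also have "\<dots> = distr (distr M (\<gamma> \<sigma> I) (\<lambda>\<omega>. \<lambda>k\<in>I. \<zeta> k \<omega>)) (Nd \<sigma>) (\<lambda>x. x k)"
      using mz k by (simp add: distr_distr)
    also have "\<dots> = Nd \<sigma>" unfolding dz using distr_PiM_component[of I "\<lambda>_. Nd \<sigma>" k] N_prob[OF \<sigma>] k by simp
    finally show ?thesis .
  qed
  have indz: "indep_vars (\<lambda>_. borel) \<zeta> I"
  proof -
    have "distr M (PiM I (\<lambda>_. borel)) (\<lambda>\<omega>. \<lambda>k\<in>I. \<zeta> k \<omega>) = distr M (\<gamma> \<sigma> I) (\<lambda>\<omega>. \<lambda>k\<in>I. \<zeta> k \<omega>)"
      by (rule distr_cong) (simp_all add: sPi)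
    also have "\<dots> = PiM I (\<lambda>k. distr M borel (\<zeta> k))" unfolding dz by (rule PiM_cong) (simp_all add: dzk)
    finally show ?thesis using indep_vars_iff_distr_eq_PiM'[OF I0 rvz] by simp
  qed
  have Teq: "Tphi T \<phi> n k (\<lambda>t. \<eta> t \<omega>) = (1 / sqrt (real n)) * \<zeta> k \<omega>" for k \<omega>
  proof -
    have sn: "sqrt (real n) * sqrt (real n) = real n" using n by simp
    have "(1 / sqrt (real n)) * \<zeta> k \<omega> = (\<Sum>l\<in>I. (1 / (sqrt (real n) * sqrt (real n))) * (\<phi> k (tt l) * \<eta> (tt l) \<omega>))"
      unfolding \<zeta>_def Q_def by (simp add: sum_distrib_left)
    also have "\<dots> = (1 / real n) * (\<Sum>l\<in>I. \<phi> k (tt l) * \<eta> (tt l) \<omega>)" unfolding sn by (simp add: sum_distrib_left)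
    finally show ?thesis unfolding Tphi_real tt_def I_def by simp
  qed
  have ind: "indep_vars (\<lambda>_. borel) (\<lambda>k \<omega>. Tphi T \<phi> n k (\<lambda>t. \<eta> t \<omega>)) I"
  proof -
    have "indep_vars (\<lambda>_. borel) (\<lambda>k \<omega>. (\<lambda>x. (1 / sqrt (real n)) * x) (\<zeta> k \<omega>)) I"
      by (rule indep_vars_compose2[OF indz]) simp
    then show ?thesis unfolding Teq .
  qed
  have gauss: "distr M borel (\<lambda>\<omega>. Tphi T \<phi> n k (\<lambda>t. \<eta> t \<omega>)) = Nd (\<sigma> / sqrt (real n))" if k: "k \<in> I" for k
  proof -
    have dd: "distributed M lborel (\<zeta> k) (normal_density 0 \<sigma>)"
      unfolding distributed_def
    proof (intro conjI)
      show "distr M lborel (\<zeta> k) = density lborel (normal_density 0 \<sigma>)"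
      proof -
        have "distr M lborel (\<zeta> k) = distr M borel (\<zeta> k)" by (rule distr_cong) simp_all
        then show ?thesis using dzk[OF k] by simp
      qed
      show "\<zeta> k \<in> measurable M lborel" using rvz[OF k] by simp
    qed simp
    have a0: "1 / sqrt (real n) \<noteq> 0" using n by simp
    have "distributed M lborel (\<lambda>x. 0 + (1 / sqrt (real n)) * \<zeta> k x) (normal_density (0 + (1 / sqrt (real n)) * 0) (\<bar>1 / sqrt (real n)\<bar> * \<sigma>))"
      by (rule normal_density_affine[OF dd \<sigma> a0])
    then have "distr M lborel (\<lambda>x. (1 / sqrt (real n)) * \<zeta> k x) = Nd (\<sigma> / sqrt (real n))"
      unfolding distributed_def by simp
    moreover have "distr M borel (\<lambda>\<omega>. Tphi T \<phi> n k (\<lambda>t. \<eta> t \<omega>)) = distr M lborel (\<lambda>x. (1 / sqrt (real n)) * \<zeta> k x)"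
      unfolding Teq by (rule distr_cong) simp_all
    ultimately show ?thesis by simp
  qed
  show ?thesis using ind gauss unfolding I_def by simp
qed

lemma part2_zero:
  fixes M :: "'a measure" and \<eta> :: "real \<Rightarrow> 'a \<Rightarrow> real"
  assumes M: "prob_space M" and T: "T > 0" and n: "n > 0"
    and \<eta>g: "\<And>t. t \<in> {0..T} \<Longrightarrow> centred_gaussian M 0 (\<eta> t)"
  shows "prob_space.indep_vars M (\<lambda>_. borel) (\<lambda>k \<omega>. Tphi T \<phi> n k (\<lambda>t. \<eta> t \<omega>)) {1..n}
      \<and> (\<forall>k\<in>{1..n}. centred_gaussian M 0 (\<lambda>\<omega>. Tphi T \<phi> n k (\<lambda>t. \<eta> t \<omega>)))"
proof -
  interpret prob_space M by (rule M)
  define I where "I = {1..n}"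
  define tt where "tt l = T * real l / real n" for l
  have ttI: "tt l \<in> {0..T}" if "l \<in> I" for l using tt_range[OF T] that unfolding tt_def I_def by simp
  have I0: "I \<noteq> {}" using n unfolding I_def by auto
  have finI: "finite I" unfolding I_def by simp
  have meta: "\<eta> t \<in> borel_measurable M" if "t \<in> {0..T}" for t using \<eta>g[OF that] unfolding centred_gaussian_def by simp
  have AE0: "AE \<omega> in M. \<eta> t \<omega> = 0" if t: "t \<in> {0..T}" for t
  proof -
    have d: "distr M borel (\<eta> t) = return borel 0" using \<eta>g[OF t] unfolding centred_gaussian_def by simp
    have "AE x in distr M borel (\<eta> t). x = 0" unfolding d by (subst AE_return) simp_all
    then show ?thesis by (rule AE_distrD[OF meta[OF t]])
  qed
  define Z where "Z k \<omega> = Tphi T \<phi> n k (\<lambda>t. \<eta> t \<omega>)" for k \<omega>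
  have Zeq: "Z k \<omega> = (1 / real n) * (\<Sum>l\<in>I. \<phi> k (tt l) * \<eta> (tt l) \<omega>)" for k \<omega>
    unfolding Z_def Tphi_real tt_def I_def ..
  have mZ: "Z k \<in> borel_measurable M" for k
  proof -
    have "(\<lambda>\<omega>. (1 / real n) * (\<Sum>l\<in>I. \<phi> k (tt l) * \<eta> (tt l) \<omega>)) \<in> borel_measurable M"
      using meta ttI by (intro borel_measurable_times borel_measurable_const borel_measurable_sum) auto
    then show ?thesis unfolding Zeq[abs_def] .
  qed
  have AEZ: "AE \<omega> in M. \<forall>k\<in>I. Z k \<omega> = 0"
  proof -
    have "AE \<omega> in M. \<forall>l\<in>I. \<eta> (tt l) \<omega> = 0" using AE0 ttI by (intro AE_finite_allI[OF finI]) auto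
    then show ?thesis by eventually_elim (simp add: Zeq)
  qed
  have dZ: "distr M borel (Z k) = return borel 0" if k: "k \<in> I" for k
  proof -
    have "distr M borel (Z k) = distr M borel (\<lambda>_. 0)"
      by (rule distr_cong_AE) (use AEZ k mZ in \<open>auto elim: AE_mp\<close>)
    then show ?thesis by simp
  qed
  have ind: "indep_vars (\<lambda>_. borel) Z I"
  proof -
    have "distr M (PiM I (\<lambda>_. borel)) (\<lambda>\<omega>. \<lambda>k\<in>I. Z k \<omega>) = distr M (PiM I (\<lambda>_. borel)) (\<lambda>\<omega>. \<lambda>k\<in>I. (0::real))"
    proof (rule distr_cong_AE)
      show "AE x in M. (\<lambda>k\<in>I. Z k x) = (\<lambda>k\<in>I. 0)" using AEZ by eventually_elim (auto simp: fun_eq_iff)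
    qed (use mZ in \<open>auto intro!: measurable_restrict\<close>)
    also have "\<dots> = return (PiM I (\<lambda>_. borel)) (\<lambda>k\<in>I. 0)" by (subst distr_const) (auto simp: space_PiM)
    also have "\<dots> = PiM I (\<lambda>k. return borel 0)" by (rule PiM_return[symmetric]) (simp_all add: finI)
    also have "\<dots> = PiM I (\<lambda>k. distr M borel (Z k))" by (rule PiM_cong) (simp_all add: dZ)
    moreover have rvZ: "\<And>k. k \<in> I \<Longrightarrow> random_variable borel (Z k)" using mZ by simp
    ultimately show ?thesis using indep_vars_iff_distr_eq_PiM'[OF I0 rvZ] by simp
  qed
  show ?thesis using ind dZ mZ unfolding Z_def[abs_def] I_def centred_gaussian_def by simp
qed

theorem lemmaD4:
  fixes M :: "'a measure"
    and T :: real
    and \<phi> :: "nat \<Rightarrow> real \<Rightarrow> real"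
    and G :: "nat set"
    and U :: "real \<Rightarrow> 'a \<Rightarrow> real"
    and X :: "real \<Rightarrow> 'a \<Rightarrow> real^'d"
    and \<eta> :: "real \<Rightarrow> 'a \<Rightarrow> real"
    and \<sigma>\<eta> :: real
    and \<beta> :: "real^'d"
    and Y :: "real \<Rightarrow> 'a \<Rightarrow> real"
    and c :: "nat \<Rightarrow> nat"
  assumes M: "prob_space M"
    and T: "T > 0"
    and ONB: "ONB_L2 T \<phi>"
    and cont: "one_sided_continuous T \<phi>"
    and G: "G \<subseteq> {1..}"
    and U_meas: "(\<lambda>(t, \<omega>). U t \<omega>) \<in> borel_measurable (restrict_space lborel {0..T} \<Otimes>\<^sub>M M)"
    and U_L2: "(\<integral>\<^sup>+ \<omega>. (\<integral>\<^sup>+ t. indicator {0..T} t * ennreal ((U t \<omega>)\<^sup>2) \<partial>lborel) \<partial>M) < \<infinity>"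
    and U_G: "\<forall>k\<ge>1. k \<notin> G \<longrightarrow> (AE \<omega> in M. L2inner T (\<lambda>t. U t \<omega>) (\<phi> k) = 0)"
    and U_exp: "AE \<omega> in M. \<forall>t\<in>{0..T}.
                  (\<lambda>k. if k \<in> G then L2inner T (\<phi> k) (\<lambda>s. U s \<omega>) * \<phi> k t else 0) sums U t \<omega>"
    and X_meas: "\<forall>t\<in>{0..T}. X t \<in> borel_measurable M"
    and \<sigma>: "\<sigma>\<eta> \<ge> 0"
    and \<eta>_indep: "prob_space.indep_vars M (\<lambda>_. borel) \<eta> {0..T}"
    and \<eta>_gauss: "\<forall>t\<in>{0..T}. centred_gaussian M (\<sigma>\<eta>\<^sup>2) (\<eta> t)"
    and \<eta>_X_indep: "prob_space.indep_set M
       (sets (vimage_algebra (space M) (\<lambda>\<omega>. restrict (\<lambda>t. \<eta> t \<omega>) {0..T}) (PiM {0..T} (\<lambda>_. borel))))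
       (sets (vimage_algebra (space M) (\<lambda>\<omega>. restrict (\<lambda>t. X t \<omega>) {0..T}) (PiM {0..T} (\<lambda>_. borel))))"
    and Y: "\<forall>t\<in>{0..T}. \<forall>\<omega>\<in>space M. Y t \<omega> = X t \<omega> \<bullet> \<beta> + U t \<omega> + \<eta> t \<omega>"
    and c: "\<forall>n. card (G \<inter> {1..n}) \<le> c n"
    and A1: "\<forall>n l k. 1 \<le> l \<and> l \<le> n \<and> 1 \<le> k \<and> k \<le> n \<longrightarrow>
               (1 / real n) * (\<Sum>j=1..n. \<phi> l (T * real j / real n) * \<phi> k (T * real j / real n))
               = (if l = k then 1 else 0)"
    and A2: "\<forall>\<delta>>0. \<exists>c'>0. \<exists>nbar. \<forall>n\<ge>nbar. \<exists>S'. S' \<subseteq> {1..n} \<and> card S' = 2 * c n + CARD('d) \<and>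
               measure M {\<omega> \<in> space M. \<forall>S''. S'' \<subseteq> S' \<and> card S'' = CARD('d) \<longrightarrow>
                  lambda_min (gram T \<phi> n (\<lambda>t. X t \<omega>) S'') \<ge> c'} \<ge> 1 - \<delta>"
  shows "(\<forall>n. real (card (Ucal c n)) \<le> (exp 1 * real n / real (c n)) ^ c n)
       \<and> (\<forall>n. prob_space.indep_vars M (\<lambda>_. borel) (\<lambda>k \<omega>. Tphi T \<phi> n k (\<lambda>t. \<eta> t \<omega>)) {1..n}
              \<and> (\<forall>k\<in>{1..n}. centred_gaussian M (\<sigma>\<eta>\<^sup>2 / real n) (\<lambda>\<omega>. Tphi T \<phi> n k (\<lambda>t. \<eta> t \<omega>))))
       \<and> (\<forall>\<delta>>0. \<exists>c'>0. \<exists>nbar. \<forall>n\<ge>nbar.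
              measure M {\<omega> \<in> space M. \<forall>S\<in>Ucal c n.
                 sqrt (lambda_min (gram T \<phi> n (\<lambda>t. X t \<omega>) (S - G \<inter> {1..n}))) \<ge> c'} \<ge> 1 - \<delta>)"
proof -
  have P1: "\<forall>n. real (card (Ucal c n)) \<le> (exp 1 * real n / real (c n)) ^ c n" using part1 by blast
  have P3: "\<forall>\<delta>>0. \<exists>c'>0. \<exists>nbar. \<forall>n\<ge>nbar.
              measure M {\<omega> \<in> space M. \<forall>S\<in>Ucal c n.
                 sqrt (lambda_min (gram T \<phi> n (\<lambda>t. X t \<omega>) (S - G \<inter> {1..n}))) \<ge> c'} \<ge> 1 - \<delta>"
    by (rule part3[OF M T X_meas c A2])
  have P2: "prob_space.indep_vars M (\<lambda>_. borel) (\<lambda>k \<omega>. Tphi T \<phi> n k (\<lambda>t. \<eta> t \<omega>)) {1..n}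
              \<and> (\<forall>k\<in>{1..n}. centred_gaussian M (\<sigma>\<eta>\<^sup>2 / real n) (\<lambda>\<omega>. Tphi T \<phi> n k (\<lambda>t. \<eta> t \<omega>)))" for n
  proof (cases "n = 0")
    case True
    then show ?thesis using indep_vars_empty[OF M] by simp
  next
    case False
    then have n: "n > 0" by simp
    show ?thesis
    proof (cases "\<sigma>\<eta> = 0")
      case True
      then show ?thesis using part2_zero[OF M T n, of \<eta> \<phi>] \<eta>_gauss by simp
    next
      case False
      then have sp: "\<sigma>\<eta> > 0" using \<sigma> by simp
      have dd: "distr M borel (\<eta> t) = Nd \<sigma>\<eta>" if "t \<in> {0..T}" for t
        using \<eta>_gauss that sp unfolding centred_gaussian_def by simp
      have R: "prob_space.indep_vars M (\<lambda>_. borel) (\<lambda>k \<omega>. Tphi T \<phi> n k (\<lambda>t. \<eta> t \<omega>)) {1..n}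
          \<and> (\<forall>k\<in>{1..n}. distr M borel (\<lambda>\<omega>. Tphi T \<phi> n k (\<lambda>t. \<eta> t \<omega>)) = Nd (\<sigma>\<eta> / sqrt (real n)))"
        by (rule part2_pos[OF M T n sp \<eta>_indep dd]) (use A1 in blast)+
      have sq: "sqrt (\<sigma>\<eta>\<^sup>2 / real n) = \<sigma>\<eta> / sqrt (real n)" using sp by (simp add: real_sqrt_divide)
      have nz: "\<sigma>\<eta>\<^sup>2 / real n \<noteq> 0" using sp n by simp
      have meas: "(\<lambda>\<omega>. Tphi T \<phi> n k (\<lambda>t. \<eta> t \<omega>)) \<in> borel_measurable M" if "k \<in> {1..n}" for k
        using R that M unfolding prob_space.indep_vars_def[OF M] by auto
      show ?thesis using R meas nz sq unfolding centred_gaussian_def by simp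
    qed
  qed
  show ?thesis using P1 P2 P3 by blast
qed

end
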